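(* Let $d\le k$, let $R$ be a $d\times k$ matrix, $f:\{1,\dots,k\}\to\mathcal P(\{1,\dots,d\})$, and for each $n$ let $W^n,X^n\in C([0,\infty),\mathbb R^d)$, $Y^n\in C([0,\infty),\mathbb R^k)$ be continuous processes on a probability space $(\Omega^n,\mathcal F^n,P^n)$ satisfying: (i) $W^n=X^n+RY^n$; (ii) $W^n(t)\in\mathbb R^d_{\ge0}$ for all $t$ a.s.; (iii) $X^n$ converges in distribution to a $d$-dimensional Brownian motion with drift $0$, some covariance matrix $\Sigma$, started at $0$; (iv) there are constants $\delta^n\to0$ such that a.s. for each $j$: $Y^n_j(0)=0$, $Y^n_j$ is nondecreasing, and $\int_0^\infty\mathbf 1(W^n_i(s)>\delta^n\text{ for some }i\in f(j))\,dY^n_j(s)=0$. Suppose there are càdlàg processes $\check W^n,\check X^n\in D([0,\infty),\mathbb R^d)$, $\check Y^n\in D([0,\infty),\mathbb R^k)$ on the same spaces such that $X^n-\check X^n$, $Y^n-\check Y^n$, $W^n-\check W^n$ converge to $\mathbf 0$ in probability (in $D$), such that $\{\check X^n(t)-\check X^n(0)\}_{n\ge1}$ is uniformly integrable for each $t\ge0$, and such that for each $n$, $(\check X^n(t)-\check X^n(0))_{t\ge0}$ is a $P^n$-martingale with respect to the filtration generated by $(\check W^n,\check X^n,\check Y^n)$. Then for every weak limit point $(W',X',Y')$ of $\{(W^n,X^n,Y^n)\}_{n\ge1}$, $X'$ is a martingale with respect to $\mathcal F'_t=\sigma\{(W',X',Y')(s):0\le s\le t\}$.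
   Context: $D([0,\infty),\mathbb R^m)$ denotes the space of càdlàg paths with the Skorokhod topology; weak limit points are taken in $C([0,\infty),\mathbb R^{2d+k})$ with the topology of uniform convergence on compacts. *)

theory Defs
  imports "HOL-Probability.Probability"
begin

text \<open>Paths are functions real => 'e; only their values on [0,infinity) matter.\<close>

definition cpath :: "(real \<Rightarrow> 'e::topological_space) \<Rightarrow> bool" where
  "cpath x \<longleftrightarrow> continuous_on {0..} x"

definition cadlag :: "(real \<Rightarrow> 'e::topological_space) \<Rightarrow> bool" where
  "cadlag x \<longleftrightarrow> (\<forall>t\<ge>0. continuous (at_right t) x \<and> (t > 0 \<longrightarrow> (\<exists>l. (x \<longlongrightarrow> l) (at_left t))))"

definition lu_conv :: "(nat \<Rightarrow> real \<Rightarrow> 'e::metric_space) \<Rightarrow> (real \<Rightarrow> 'e) \<Rightarrow> bool" where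
  "lu_conv xs x \<longleftrightarrow> (\<forall>T. uniform_limit {0..T} xs x sequentially)"

definition bc_functional :: "((real \<Rightarrow> 'e::metric_space) \<Rightarrow> real) \<Rightarrow> bool" where
  "bc_functional F \<longleftrightarrow>
     (\<forall>x y. (\<forall>t\<ge>0. x t = y t) \<longrightarrow> F x = F y) \<and>
     (\<exists>B. \<forall>x. cpath x \<longrightarrow> \<bar>F x\<bar> \<le> B) \<and>
     (\<forall>xs x. (\<forall>n. cpath (xs n)) \<and> cpath x \<and> lu_conv xs x \<longrightarrow> (\<lambda>n. F (xs n)) \<longlonglongrightarrow> F x)"

definition conv_dist ::
  "(nat \<Rightarrow> 'a measure) \<Rightarrow> (nat \<Rightarrow> 'a \<Rightarrow> real \<Rightarrow> 'e::metric_space) \<Rightarrow> 'b measure \<Rightarrow> ('b \<Rightarrow> real \<Rightarrow> 'e) \<Rightarrow> bool" where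
  "conv_dist M Z N Z' \<longleftrightarrow>
     (\<forall>F. bc_functional F \<longrightarrow>
        (\<lambda>n. \<integral>\<omega>. F (Z n \<omega>) \<partial>M n) \<longlonglongrightarrow> (\<integral>\<omega>. F (Z' \<omega>) \<partial>N))"

definition brownian_motion :: "'b measure \<Rightarrow> real^'d^'d \<Rightarrow> ('b \<Rightarrow> real \<Rightarrow> real^'d) \<Rightarrow> bool" where
  "brownian_motion N \<Sigma> B \<longleftrightarrow>
     prob_space N \<and>
     (\<forall>t. (\<lambda>\<omega>. B \<omega> t) \<in> borel_measurable N) \<and>
     (\<forall>\<omega>\<in>space N. B \<omega> 0 = 0 \<and> cpath (B \<omega>)) \<and>
     (\<forall>(ts::nat \<Rightarrow> real) m. 0 \<le> ts 0 \<and> strict_mono ts \<longrightarrow>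
        prob_space.indep_vars N (\<lambda>_. borel) (\<lambda>i \<omega>. B \<omega> (ts (Suc i)) - B \<omega> (ts i)) {..<m}) \<and>
     (\<forall>s t u. 0 \<le> s \<and> s \<le> t \<longrightarrow>
        (\<integral>\<omega>. cis (u \<bullet> (B \<omega> t - B \<omega> s)) \<partial>N) =
          complex_of_real (exp (- (t - s) * (u \<bullet> (\<Sigma> *v u)) / 2)))"

text \<open>Convergence in probability to the zero path (uniformly on compacts; for the continuous
  limit 0 this is the same as convergence in probability in the Skorokhod space D).\<close>
definition conv_prob_zero :: "(nat \<Rightarrow> 'a measure) \<Rightarrow> (nat \<Rightarrow> 'a \<Rightarrow> real \<Rightarrow> 'e::real_normed_vector) \<Rightarrow> bool" where
  "conv_prob_zero M Z \<longleftrightarrow>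
     (\<forall>T \<epsilon>. \<epsilon> > 0 \<longrightarrow>
        (\<lambda>n. measure (M n) {\<omega>\<in>space (M n). \<exists>t\<in>{0..T}. norm (Z n \<omega> t) > \<epsilon>}) \<longlonglongrightarrow> 0)"

definition unif_integrable :: "(nat \<Rightarrow> 'a measure) \<Rightarrow> (nat \<Rightarrow> 'a \<Rightarrow> 'e::real_normed_vector) \<Rightarrow> bool" where
  "unif_integrable M Z \<longleftrightarrow>
     ((\<lambda>K. \<Squnion>n. \<integral>\<^sup>+\<omega>. ennreal (norm (Z n \<omega>)) * indicator {\<omega>. norm (Z n \<omega>) > K} \<omega> \<partial>M n)
        \<longlongrightarrow> 0) at_top"

definition nat_filt :: "'a measure \<Rightarrow> ('a \<Rightarrow> real \<Rightarrow> 'e::topological_space) \<Rightarrow> real \<Rightarrow> 'a set set" where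
  "nat_filt M V t =
     sigma_sets (space M) (\<Union>s\<in>{0..t}. {(\<lambda>\<omega>. V \<omega> s) -` A \<inter> space M | A. A \<in> sets borel})"

text \<open>Martingale (indexed by t >= 0) w.r.t. a filtration F: adapted, integrable, and
  E[Z t | F s] = Z s, written via the defining property of conditional expectation.\<close>
definition martingale :: "'a measure \<Rightarrow> (real \<Rightarrow> 'a set set) \<Rightarrow> ('a \<Rightarrow> real \<Rightarrow> 'e::{banach,second_countable_topology}) \<Rightarrow> bool" where
  "martingale M F Z \<longleftrightarrow>
     (\<forall>t\<ge>0. \<forall>A\<in>sets borel. (\<lambda>\<omega>. Z \<omega> t) -` A \<inter> space M \<in> F t) \<and>
     (\<forall>t\<ge>0. integrable M (\<lambda>\<omega>. Z \<omega> t)) \<and>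
     (\<forall>s t A. 0 \<le> s \<and> s \<le> t \<and> A \<in> F s \<longrightarrow>
        set_lebesgue_integral M A (\<lambda>\<omega>. Z \<omega> t) = set_lebesgue_integral M A (\<lambda>\<omega>. Z \<omega> s))"

end

theory Submission
  imports Defs
begin

lemma bounded_inprob_L1:
  fixes Y :: "nat \<Rightarrow> 'a \<Rightarrow> real"
  assumes P: "\<And>n. prob_space (M n)" and meas: "\<And>n. Y n \<in> borel_measurable (M n)"
    and bnd: "\<And>n \<omega>. \<omega>\<in>space (M n) \<Longrightarrow> 0 \<le> Y n \<omega> \<and> Y n \<omega> \<le> B"
    and cp: "\<And>e. e>0 \<Longrightarrow> (\<lambda>n. measure (M n) {\<omega>\<in>space (M n). Y n \<omega> > e}) \<longlonglongrightarrow> 0"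
  shows "(\<lambda>n. \<integral>\<omega>. Y n \<omega> \<partial>M n) \<longlonglongrightarrow> 0"
proof (rule LIMSEQ_I)
  fix r :: real assume r: "r > 0"
  have B0: "0 \<le> B"
  proof -
    interpret prob_space "M 0" by (rule P)
    obtain \<omega> where "\<omega> \<in> space (M 0)" using not_empty by blast
    then show ?thesis using bnd[of \<omega> 0] by linarith
  qed
  have "(\<lambda>n. B * measure (M n) {\<omega>\<in>space (M n). Y n \<omega> > r/2}) \<longlonglongrightarrow> B * 0"
    by (intro tendsto_mult tendsto_const cp) (use r in auto)
  from LIMSEQ_D[OF this, of "r/2"] r obtain n0 where
    n0: "\<forall>n\<ge>n0. norm (B * measure (M n) {\<omega>\<in>space (M n). Y n \<omega> > r/2} - B * 0) < r/2"
    by auto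
  show "\<exists>no. \<forall>n\<ge>no. norm ((\<integral>\<omega>. Y n \<omega> \<partial>M n) - 0) < r"
  proof (intro exI allI impI)
    fix n assume "n \<ge> n0"
    interpret p: prob_space "M n" by (rule P)
    let ?S = "{\<omega>\<in>space (M n). Y n \<omega> > r/2}"
    have S: "?S \<in> sets (M n)" using meas[of n] by measurable
    have iY: "integrable (M n) (Y n)"
      by (rule p.integrable_const_bound[where B=B]) (use bnd meas in auto)
    have "(\<integral>\<omega>. Y n \<omega> \<partial>M n) \<le> (\<integral>\<omega>. r/2 + B * indicator ?S \<omega> \<partial>M n)"
    proof (rule integral_mono)
      show "integrable (M n) (\<lambda>\<omega>. r/2 + B * indicator ?S \<omega>)"
        using S B0 r by (intro p.integrable_const_bound[where B="r/2+B"]) (auto simp: indicator_def)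
      fix \<omega> assume w: "\<omega> \<in> space (M n)"
      show "Y n \<omega> \<le> r/2 + B * indicator ?S \<omega>"
        using bnd[OF w] w r by (auto simp: indicator_def)
    qed (rule iY)
    also have "\<dots> = r/2 + B * measure (M n) ?S"
    proof -
      have iI: "integrable (M n) (indicator ?S :: 'a \<Rightarrow> real)"
        using S by (intro integrable_real_indicator) (auto simp: p.emeasure_finite less_top[symmetric])
      have "(\<integral>\<omega>. r/2 + B * indicator ?S \<omega> \<partial>M n) = (\<integral>\<omega>. r/2 \<partial>M n) + (\<integral>\<omega>. B * indicator ?S \<omega> \<partial>M n)"
        using iI by (intro Bochner_Integration.integral_add) auto
      also have "\<dots> = r/2 + B * measure (M n) ?S"
        using S by (simp add: p.prob_space)
      finally show ?thesis .
    qed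
    finally have le: "(\<integral>\<omega>. Y n \<omega> \<partial>M n) \<le> r/2 + B * measure (M n) ?S" .
    have ge: "0 \<le> (\<integral>\<omega>. Y n \<omega> \<partial>M n)" using bnd by (intro integral_nonneg_AE) auto
    have "B * measure (M n) ?S < r/2" using n0 \<open>n \<ge> n0\<close> B0 by auto
    then show "norm ((\<integral>\<omega>. Y n \<omega> \<partial>M n) - 0) < r" using le ge by auto
  qed
qed

lemma mart_fun:
  fixes Z g :: "'a \<Rightarrow> real"
  assumes P: "prob_space M" and Gs: "Gs \<subseteq> sets M" and iZ: "integrable M Z"
    and zero: "\<And>A. A \<in> sigma_sets (space M) Gs \<Longrightarrow> (\<integral>\<omega>. indicator A \<omega> * Z \<omega> \<partial>M) = 0"
    and gm: "g \<in> borel_measurable (sigma (space M) Gs)"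
    and gb: "\<And>\<omega>. \<omega>\<in>space M \<Longrightarrow> \<bar>g \<omega>\<bar> \<le> B"
  shows "(\<integral>\<omega>. g \<omega> * Z \<omega> \<partial>M) = 0"
proof -
  interpret prob_space M by (rule P)
  let ?F = "sigma (space M) Gs"
  have GsP: "Gs \<subseteq> Pow (space M)" using Gs sets.sets_into_space by auto
  have ss: "sigma_sets (space M) Gs \<subseteq> sets M" by (rule sets.sigma_sets_subset[OF Gs])
  have sub: "subalgebra M ?F"
    unfolding subalgebra_def using GsP ss
    by (auto simp: sets_measure_of space_measure_of_conv)
  interpret finite_measure_subalgebra M ?F
    by unfold_locales (rule sub)
  have Zm[measurable]: "Z \<in> borel_measurable M" using iZ by auto
  have gM[measurable]: "g \<in> borel_measurable M" by (rule measurable_from_subalg[OF sub gm])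
  have ae: "AE x in M. real_cond_exp M ?F Z x = 0"
  proof (rule real_cond_exp_charact)
    fix A assume "A \<in> sets ?F"
    then have "A \<in> sigma_sets (space M) Gs" using GsP by (simp add: sets_measure_of)
    then show "(\<integral>x\<in>A. Z x \<partial>M) = (\<integral>x\<in>A. 0 \<partial>M)"
      using zero by (simp add: set_lebesgue_integral_def)
  qed (use iZ in auto)
  have igZ: "integrable M (\<lambda>x. g x * Z x)"
  proof (rule Bochner_Integration.integrable_bound[where f="\<lambda>x. B * Z x"])
    show "integrable M (\<lambda>x. B * Z x)" using iZ by auto
    show "AE x in M. norm (g x * Z x) \<le> norm (B * Z x)"
    proof (rule AE_I2)
      fix x assume x: "x \<in> space M"
      have "\<bar>g x\<bar> * \<bar>Z x\<bar> \<le> \<bar>B\<bar> * \<bar>Z x\<bar>" using gb[OF x] by (intro mult_right_mono) auto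
      then show "norm (g x * Z x) \<le> norm (B * Z x)" by (simp add: abs_mult)
    qed
  qed measurable
  have "(\<integral>\<omega>. g \<omega> * Z \<omega> \<partial>M) = (\<integral>\<omega>. g \<omega> * real_cond_exp M ?F Z \<omega> \<partial>M)"
    by (rule real_cond_exp_intg(2)[symmetric]) (use igZ gm in auto)
  also have "\<dots> = (\<integral>\<omega>. 0 \<partial>M)"
    by (rule integral_cong_AE) (use ae in auto)
  finally show ?thesis by simp
qed

lemma prod_diff_le:
  fixes a b :: "nat \<Rightarrow> real"
  assumes "\<And>i. i < m \<Longrightarrow> 0 \<le> a i \<and> a i \<le> 1 \<and> 0 \<le> b i \<and> b i \<le> 1"
  shows "\<bar>(\<Prod>i<m. a i) - (\<Prod>i<m. b i)\<bar> \<le> (\<Sum>i<m. \<bar>a i - b i\<bar>)"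
  using assms
proof (induction m)
  case 0 then show ?case by simp
next
  case (Suc m)
  let ?A = "\<Prod>i<m. a i" and ?B = "\<Prod>i<m. b i"
  have IH: "\<bar>?A - ?B\<bar> \<le> (\<Sum>i<m. \<bar>a i - b i\<bar>)" using Suc by auto
  have A01: "0 \<le> ?A \<and> ?A \<le> 1" using Suc.prems by (auto intro!: prod_nonneg prod_le_1)
  have B01: "0 \<le> ?B \<and> ?B \<le> 1" using Suc.prems by (auto intro!: prod_nonneg prod_le_1)
  have ab: "0 \<le> a m \<and> a m \<le> 1 \<and> 0 \<le> b m \<and> b m \<le> 1" using Suc.prems by auto
  have "?A * a m - ?B * b m = (?A - ?B) * a m + ?B * (a m - b m)" by (simp add: algebra_simps)
  then have "\<bar>?A * a m - ?B * b m\<bar> \<le> \<bar>?A - ?B\<bar> * \<bar>a m\<bar> + \<bar>?B\<bar> * \<bar>a m - b m\<bar>"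
    by (metis abs_mult abs_triangle_ineq)
  also have "\<dots> \<le> \<bar>?A - ?B\<bar> * 1 + 1 * \<bar>a m - b m\<bar>"
    using ab B01 by (intro add_mono mult_left_mono mult_right_mono) auto
  finally show ?case using IH by simp
qed

definition inprob :: "(nat \<Rightarrow> 'a measure) \<Rightarrow> (nat \<Rightarrow> 'a \<Rightarrow> real) \<Rightarrow> bool" where
  "inprob M Y \<longleftrightarrow> (\<forall>e>0. (\<lambda>n. measure (M n) {\<omega>\<in>space (M n). Y n \<omega> > e}) \<longlonglongrightarrow> 0)"

lemma inprob_add:
  assumes P: "\<And>n. prob_space (M n)"
    and m: "\<And>n. Y n \<in> borel_measurable (M n)" "\<And>n. Y1 n \<in> borel_measurable (M n)" "\<And>n. Y2 n \<in> borel_measurable (M n)"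
    and le: "\<And>n \<omega>. \<omega> \<in> space (M n) \<Longrightarrow> Y n \<omega> \<le> Y1 n \<omega> + Y2 n \<omega>"
    and i1: "inprob M Y1" and i2: "inprob M Y2"
  shows "inprob M Y"
  unfolding inprob_def
proof (intro allI impI)
  fix e :: real assume e: "e > 0"
  have l1: "(\<lambda>n. measure (M n) {\<omega>\<in>space (M n). Y1 n \<omega> > e/2}) \<longlonglongrightarrow> 0"
    using i1[unfolded inprob_def, rule_format, of "e/2"] e by auto
  have l2: "(\<lambda>n. measure (M n) {\<omega>\<in>space (M n). Y2 n \<omega> > e/2}) \<longlonglongrightarrow> 0"
    using i2[unfolded inprob_def, rule_format, of "e/2"] e by auto
  have l12: "(\<lambda>n. measure (M n) {\<omega>\<in>space (M n). Y1 n \<omega> > e/2} + measure (M n) {\<omega>\<in>space (M n). Y2 n \<omega> > e/2}) \<longlonglongrightarrow> 0"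
    using tendsto_add[OF l1 l2] by (simp only: add_0_left)
  show "(\<lambda>n. measure (M n) {\<omega>\<in>space (M n). Y n \<omega> > e}) \<longlonglongrightarrow> 0"
  proof (rule tendsto_sandwich[OF _ _ tendsto_const l12])
    show "\<forall>\<^sub>F n in sequentially. 0 \<le> measure (M n) {\<omega>\<in>space (M n). Y n \<omega> > e}" by auto
    show "\<forall>\<^sub>F n in sequentially. measure (M n) {\<omega>\<in>space (M n). Y n \<omega> > e} \<le>
          measure (M n) {\<omega>\<in>space (M n). Y1 n \<omega> > e/2} + measure (M n) {\<omega>\<in>space (M n). Y2 n \<omega> > e/2}"
    proof (intro always_eventually allI)
      fix n
      interpret p: prob_space "M n" by (rule P)
      have s1: "{\<omega>\<in>space (M n). Y1 n \<omega> > e/2} \<in> sets (M n)" using m(2)[of n] by measurable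
      have s2: "{\<omega>\<in>space (M n). Y2 n \<omega> > e/2} \<in> sets (M n)" using m(3)[of n] by measurable
      have "measure (M n) {\<omega>\<in>space (M n). Y n \<omega> > e} \<le>
            measure (M n) ({\<omega>\<in>space (M n). Y1 n \<omega> > e/2} \<union> {\<omega>\<in>space (M n). Y2 n \<omega> > e/2})"
        using s1 s2 le[of _ n] by (intro p.finite_measure_mono) force+
      also have "\<dots> \<le> measure (M n) {\<omega>\<in>space (M n). Y1 n \<omega> > e/2} + measure (M n) {\<omega>\<in>space (M n). Y2 n \<omega> > e/2}"
        using s1 s2 by (rule measure_Un_le)
      finally show "measure (M n) {\<omega>\<in>space (M n). Y n \<omega> > e} \<le>
          measure (M n) {\<omega>\<in>space (M n). Y1 n \<omega> > e/2} + measure (M n) {\<omega>\<in>space (M n). Y2 n \<omega> > e/2}" .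
    qed
  qed
qed

lemma inprob_zero: "inprob M (\<lambda>n \<omega>. 0)"
  unfolding inprob_def by simp

lemma inprob_mono:
  assumes P: "\<And>n. prob_space (M n)"
    and m: "\<And>n. Y n \<in> borel_measurable (M n)" "\<And>n. Y1 n \<in> borel_measurable (M n)"
    and le: "\<And>n \<omega>. \<omega> \<in> space (M n) \<Longrightarrow> Y n \<omega> \<le> Y1 n \<omega>"
    and i1: "inprob M Y1"
  shows "inprob M Y"
  by (rule inprob_add[OF P m(1) m(2), of "\<lambda>n \<omega>. 0"]) (use le i1 inprob_zero in auto)

lemma inprob_subseq:
  assumes "inprob M Y" "strict_mono r"
  shows "inprob (\<lambda>n. M (r n)) (\<lambda>n. Y (r n))"
  using assms unfolding inprob_def by (auto intro: LIMSEQ_subseq_LIMSEQ[unfolded comp_def])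

locale wlim =
  fixes M :: "nat \<Rightarrow> 'a measure" and V Vc :: "nat \<Rightarrow> 'a \<Rightarrow> real \<Rightarrow> 'e::euclidean_space"
    and N :: "'b measure" and V' :: "'b \<Rightarrow> real \<Rightarrow> 'e" and \<pi> :: "'e \<Rightarrow> real"
    and Zc :: "nat \<Rightarrow> 'a \<Rightarrow> real \<Rightarrow> real"
  assumes P: "\<And>n. prob_space (M n)" and PN: "prob_space N"
   and Vm: "\<And>n t. (\<lambda>\<omega>. V n \<omega> t) \<in> borel_measurable (M n)"
   and Vcm: "\<And>n t. (\<lambda>\<omega>. Vc n \<omega> t) \<in> borel_measurable (M n)"
   and V'm: "\<And>t. (\<lambda>\<omega>. V' \<omega> t) \<in> borel_measurable N"
   and cd: "conv_dist M V N V'"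
   and pil: "bounded_linear \<pi>" and pib: "\<And>x. \<bar>\<pi> x\<bar> \<le> norm x"
   and Zm: "\<And>n t. (\<lambda>\<omega>. Zc n \<omega> t) \<in> borel_measurable (M n)"
   and Zp: "\<And>t. t \<ge> 0 \<Longrightarrow> inprob M (\<lambda>n \<omega>. \<bar>\<pi> (V n \<omega> t) - Zc n \<omega> t\<bar>)"
   and Vp: "\<And>t. t \<ge> 0 \<Longrightarrow> inprob M (\<lambda>n \<omega>. norm (V n \<omega> t - Vc n \<omega> t))"
   and UI: "\<And>t. t \<ge> 0 \<Longrightarrow> ((\<lambda>K. \<Squnion>n. \<integral>\<^sup>+\<omega>. ennreal \<bar>Zc n \<omega> t\<bar> * indicator {\<omega>. \<bar>Zc n \<omega> t\<bar> > K} \<omega> \<partial>M n) \<longlongrightarrow> 0) at_top"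
   and Zi: "\<And>n t. t \<ge> 0 \<Longrightarrow> integrable (M n) (\<lambda>\<omega>. Zc n \<omega> t)"
   and Mt: "\<And>n s t A. 0 \<le> s \<Longrightarrow> s \<le> t \<Longrightarrow> A \<in> nat_filt (M n) (Vc n) s \<Longrightarrow>
              (\<integral>\<omega>. indicator A \<omega> * (Zc n \<omega> t - Zc n \<omega> s) \<partial>M n) = 0"
begin

lemma ui_tail:
  assumes t: "t \<ge> 0" and e: "e > 0"
  shows "\<exists>K0. \<forall>K\<ge>K0. \<forall>n. (\<integral>\<omega>. \<bar>Zc n \<omega> t\<bar> * indicator {\<omega>. \<bar>Zc n \<omega> t\<bar> > K} \<omega> \<partial>M n) \<le> e"
proof -
  have "\<forall>\<^sub>F K in at_top. (\<Squnion>n. \<integral>\<^sup>+\<omega>. ennreal \<bar>Zc n \<omega> t\<bar> * indicator {\<omega>. \<bar>Zc n \<omega> t\<bar> > K} \<omega> \<partial>M n) < ennreal e"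
    using order_tendstoD(2)[OF UI[OF t], of "ennreal e"] e by auto
  then obtain K0 where K0: "\<And>K. K \<ge> K0 \<Longrightarrow>
      (\<Squnion>n. \<integral>\<^sup>+\<omega>. ennreal \<bar>Zc n \<omega> t\<bar> * indicator {\<omega>. \<bar>Zc n \<omega> t\<bar> > K} \<omega> \<partial>M n) < ennreal e"
    by (auto simp: eventually_at_top_linorder)
  show ?thesis
  proof (intro exI allI impI)
    fix K n assume "K \<ge> K0"
    have "(\<integral>\<^sup>+\<omega>. ennreal \<bar>Zc n \<omega> t\<bar> * indicator {\<omega>. \<bar>Zc n \<omega> t\<bar> > K} \<omega> \<partial>M n) < ennreal e"
      using K0[OF \<open>K \<ge> K0\<close>] by (rule le_less_trans[rotated]) (rule SUP_upper, auto)
    moreover have "(\<integral>\<omega>. \<bar>Zc n \<omega> t\<bar> * indicator {\<omega>. \<bar>Zc n \<omega> t\<bar> > K} \<omega> \<partial>M n) =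
        enn2real (\<integral>\<^sup>+\<omega>. ennreal (\<bar>Zc n \<omega> t\<bar> * indicator {\<omega>. \<bar>Zc n \<omega> t\<bar> > K} \<omega>) \<partial>M n)"
      using Zm[of n t] by (intro integral_eq_nn_integral) auto
    moreover have "(\<lambda>\<omega>. ennreal (\<bar>Zc n \<omega> t\<bar> * indicator {\<omega>. \<bar>Zc n \<omega> t\<bar> > K} \<omega>)) =
                   (\<lambda>\<omega>. ennreal \<bar>Zc n \<omega> t\<bar> * indicator {\<omega>. \<bar>Zc n \<omega> t\<bar> > K} \<omega>)"
      by (auto simp: indicator_def)
    ultimately show "(\<integral>\<omega>. \<bar>Zc n \<omega> t\<bar> * indicator {\<omega>. \<bar>Zc n \<omega> t\<bar> > K} \<omega> \<partial>M n) \<le> e"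
      using e by (auto simp: enn2real_leI less_imp_le)
  qed
qed

lemma L1_bound:
  assumes t: "t \<ge> 0"
  shows "\<exists>C. \<forall>n. (\<integral>\<omega>. \<bar>Zc n \<omega> t\<bar> \<partial>M n) \<le> C"
proof -
  obtain K0 where K0: "\<And>K n. K \<ge> K0 \<Longrightarrow> (\<integral>\<omega>. \<bar>Zc n \<omega> t\<bar> * indicator {\<omega>. \<bar>Zc n \<omega> t\<bar> > K} \<omega> \<partial>M n) \<le> 1"
    using ui_tail[OF t, of 1] by auto
  define K where "K = max K0 0"
  show ?thesis
  proof (intro exI allI)
    fix n
    interpret p: prob_space "M n" by (rule P)
    have iZ: "integrable (M n) (\<lambda>\<omega>. Zc n \<omega> t)" by (rule Zi[OF t])
    have mS: "{\<omega>. \<bar>Zc n \<omega> t\<bar> > K} \<inter> space (M n) \<in> sets (M n)" using Zm[of n t] by measurable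
    have i2: "integrable (M n) (\<lambda>\<omega>. \<bar>Zc n \<omega> t\<bar> * indicator {\<omega>. \<bar>Zc n \<omega> t\<bar> > K} \<omega>)"
      by (rule Bochner_Integration.integrable_bound[OF integrable_abs[OF iZ]])
         (use Zm[of n t] in \<open>auto simp: indicator_def\<close>)
    have "(\<integral>\<omega>. \<bar>Zc n \<omega> t\<bar> \<partial>M n) \<le> (\<integral>\<omega>. K + \<bar>Zc n \<omega> t\<bar> * indicator {\<omega>. \<bar>Zc n \<omega> t\<bar> > K} \<omega> \<partial>M n)"
      by (rule integral_mono) (use iZ i2 in \<open>auto simp: indicator_def K_def\<close>)
    also have "\<dots> = K + (\<integral>\<omega>. \<bar>Zc n \<omega> t\<bar> * indicator {\<omega>. \<bar>Zc n \<omega> t\<bar> > K} \<omega> \<partial>M n)"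
      using i2 by (subst Bochner_Integration.integral_add) (auto simp: p.prob_space)
    also have "\<dots> \<le> K + 1" using K0[of K n] by (auto simp: K_def)
    finally show "(\<integral>\<omega>. \<bar>Zc n \<omega> t\<bar> \<partial>M n) \<le> K + 1" .
  qed
qed

end

lemma bcf_intro:
  fixes F :: "(real \<Rightarrow> 'e::metric_space) \<Rightarrow> real"
  assumes dep: "\<And>x y. (\<forall>t\<ge>0. x t = y t) \<Longrightarrow> F x = F y"
    and bnd: "\<And>x. \<bar>F x\<bar> \<le> B"
    and cont: "\<And>(xs :: nat \<Rightarrow> real \<Rightarrow> 'e) x. (\<And>u. u \<ge> 0 \<Longrightarrow> (\<lambda>n. xs n u) \<longlonglongrightarrow> x u) \<Longrightarrow> (\<lambda>n. F (xs n)) \<longlonglongrightarrow> F x"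
  shows "bc_functional F"
  unfolding bc_functional_def
proof (intro conjI allI impI)
  show "\<exists>B. \<forall>x. cpath x \<longrightarrow> \<bar>F x\<bar> \<le> B" using bnd by blast
next
  fix xs :: "nat \<Rightarrow> real \<Rightarrow> 'e" and x assume "(\<forall>n. cpath (xs n)) \<and> cpath x \<and> lu_conv xs x"
  then have lu: "lu_conv xs x" by auto
  show "(\<lambda>n. F (xs n)) \<longlonglongrightarrow> F x"
  proof (rule cont)
    fix u :: real assume "u \<ge> 0"
    then show "(\<lambda>n. xs n u) \<longlonglongrightarrow> x u"
      using lu unfolding lu_conv_def by (intro tendsto_uniform_limitI[where S="{0..u}"]) auto
  qed
qed (use dep in auto)

context wlim
begin

lemma cdI: "bc_functional F \<Longrightarrow> (\<lambda>n. \<integral>\<omega>. F (V n \<omega>) \<partial>M n) \<longlonglongrightarrow> (\<integral>\<omega>. F (V' \<omega>) \<partial>N)"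
  using cd unfolding conv_dist_def by auto

lemma pi_cont: "continuous_on UNIV \<pi>"
  using pil by (intro linear_continuous_on bounded_linear.linear) (auto simp: bounded_linear.bounded_linear)

lemma pi_tendsto: "(f \<longlongrightarrow> l) F \<Longrightarrow> ((\<lambda>x. \<pi> (f x)) \<longlongrightarrow> \<pi> l) F"
  using bounded_linear.tendsto[OF pil] .

lemma pi_meas[measurable]: "\<pi> \<in> borel_measurable borel"
  using pi_cont by (rule borel_measurable_continuous_onI)

lemma lim_integrable:
  assumes t: "t \<ge> 0"
  shows "integrable N (\<lambda>\<omega>. \<pi> (V' \<omega> t))"
proof -
  interpret pN: prob_space N by (rule PN)
  obtain C where C: "\<And>n. (\<integral>\<omega>. \<bar>Zc n \<omega> t\<bar> \<partial>M n) \<le> C" using L1_bound[OF t] by auto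
  have mN[measurable]: "(\<lambda>\<omega>. \<pi> (V' \<omega> t)) \<in> borel_measurable N"
    using V'm[of t] by measurable
  have bnd: "(\<integral>\<omega>. min K \<bar>\<pi> (V' \<omega> t)\<bar> \<partial>N) \<le> C" if K: "K \<ge> 0" for K :: real
  proof -
    define F where "F = (\<lambda>v::real\<Rightarrow>'e. min K \<bar>\<pi> (v t)\<bar>)"
    have bF: "bc_functional F"
    proof (rule bcf_intro[where B=K])
      show "\<And>x y. \<forall>t\<ge>0. x t = y t \<Longrightarrow> F x = F y" using t by (auto simp: F_def)
      show "\<bar>F x\<bar> \<le> K" for x using K by (auto simp: F_def)
      show "(\<lambda>n. F (xs n)) \<longlonglongrightarrow> F x" if "\<And>u. u \<ge> 0 \<Longrightarrow> (\<lambda>n. xs n u) \<longlonglongrightarrow> x u" for xs x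
        unfolding F_def using that[OF t] by (intro tendsto_intros pi_tendsto)
    qed
    have lim1: "(\<lambda>n. \<integral>\<omega>. F (V n \<omega>) \<partial>M n) \<longlonglongrightarrow> (\<integral>\<omega>. F (V' \<omega>) \<partial>N)" by (rule cdI[OF bF])
    define Y where "Y = (\<lambda>n \<omega>. min K \<bar>\<pi> (V n \<omega> t) - Zc n \<omega> t\<bar>)"
    have Ym: "Y n \<in> borel_measurable (M n)" for n
      unfolding Y_def using Vm[of n t] Zm[of n t] by measurable
    have lim2: "(\<lambda>n. \<integral>\<omega>. Y n \<omega> \<partial>M n) \<longlonglongrightarrow> 0"
    proof (rule bounded_inprob_L1[OF P Ym])
      show "\<And>n \<omega>. 0 \<le> Y n \<omega> \<and> Y n \<omega> \<le> K" using K by (auto simp: Y_def)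
      fix e :: real assume e: "e > 0"
      have "inprob M Y"
        by (rule inprob_mono[OF P Ym _ _ Zp[OF t]])
           (use Vm Zm in \<open>auto simp: Y_def\<close>)
      then show "(\<lambda>n. measure (M n) {\<omega>\<in>space (M n). Y n \<omega> > e}) \<longlonglongrightarrow> 0"
        using e unfolding inprob_def by auto
    qed
    have le: "(\<integral>\<omega>. F (V n \<omega>) \<partial>M n) \<le> (\<integral>\<omega>. Y n \<omega> \<partial>M n) + C" for n
    proof -
      interpret p: prob_space "M n" by (rule P)
      have iZ: "integrable (M n) (\<lambda>\<omega>. Zc n \<omega> t)" by (rule Zi[OF t])
      have iY: "integrable (M n) (Y n)"
        by (rule p.integrable_const_bound[where B=K]) (use Ym K in \<open>auto simp: Y_def\<close>)
      have "(\<integral>\<omega>. F (V n \<omega>) \<partial>M n) \<le> (\<integral>\<omega>. Y n \<omega> + \<bar>Zc n \<omega> t\<bar> \<partial>M n)"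
      proof (rule integral_mono)
        show "integrable (M n) (\<lambda>\<omega>. F (V n \<omega>))"
          by (rule p.integrable_const_bound[where B=K]) (use K Vm[of n t] in \<open>auto simp: F_def\<close>)
        show "integrable (M n) (\<lambda>\<omega>. Y n \<omega> + \<bar>Zc n \<omega> t\<bar>)" using iY iZ by auto
        fix \<omega> show "F (V n \<omega>) \<le> Y n \<omega> + \<bar>Zc n \<omega> t\<bar>"
          unfolding F_def Y_def by (auto simp: min_def abs_if split: if_splits)
      qed
      also have "\<dots> = (\<integral>\<omega>. Y n \<omega> \<partial>M n) + (\<integral>\<omega>. \<bar>Zc n \<omega> t\<bar> \<partial>M n)"
        using iY iZ by (intro Bochner_Integration.integral_add) auto
      finally show ?thesis using C[of n] by linarith
    qed
    have "(\<integral>\<omega>. F (V' \<omega>) \<partial>N) \<le> 0 + C"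
      by (rule LIMSEQ_le[OF lim1 tendsto_add[OF lim2 tendsto_const]]) (use le in auto)
    then show ?thesis by (simp add: F_def)
  qed
  show ?thesis
  proof (rule integrableI_bounded)
    have eq: "(\<lambda>\<omega>. ennreal (norm (\<pi> (V' \<omega> t)))) = (\<lambda>\<omega>. SUP K::nat. ennreal (min (real K) \<bar>\<pi> (V' \<omega> t)\<bar>))"
    proof
      fix \<omega>
      have "(\<lambda>K::nat. ennreal (min (real K) \<bar>\<pi> (V' \<omega> t)\<bar>)) \<longlonglongrightarrow> ennreal (\<bar>\<pi> (V' \<omega> t)\<bar>)"
      proof (intro tendsto_ennrealI)
        obtain K0 :: nat where "\<bar>\<pi> (V' \<omega> t)\<bar> \<le> real K0" using real_arch_simple by blast
        then have "\<forall>\<^sub>F K in sequentially. min (real K) \<bar>\<pi> (V' \<omega> t)\<bar> = \<bar>\<pi> (V' \<omega> t)\<bar>"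
          unfolding eventually_sequentially by (intro exI[of _ K0]) (auto simp: min_def)
        then show "(\<lambda>K. min (real K) \<bar>\<pi> (V' \<omega> t)\<bar>) \<longlonglongrightarrow> \<bar>\<pi> (V' \<omega> t)\<bar>"
          by (rule tendsto_eventually)
      qed
      moreover have "incseq (\<lambda>K::nat. ennreal (min (real K) \<bar>\<pi> (V' \<omega> t)\<bar>))"
      proof (rule incseq_SucI)
        fix K :: nat show "ennreal (min (real K) \<bar>\<pi> (V' \<omega> t)\<bar>) \<le> ennreal (min (real (Suc K)) \<bar>\<pi> (V' \<omega> t)\<bar>)"
          by (rule ennreal_leI) linarith
      qed
      ultimately have "ennreal (\<bar>\<pi> (V' \<omega> t)\<bar>) = (SUP K::nat. ennreal (min (real K) \<bar>\<pi> (V' \<omega> t)\<bar>))"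
        by (rule LIMSEQ_unique[OF _ LIMSEQ_SUP])
      then show "ennreal (norm (\<pi> (V' \<omega> t))) = (SUP K::nat. ennreal (min (real K) \<bar>\<pi> (V' \<omega> t)\<bar>))"
        by simp
    qed
    have "(\<integral>\<^sup>+\<omega>. ennreal (norm (\<pi> (V' \<omega> t))) \<partial>N) = (SUP K::nat. \<integral>\<^sup>+\<omega>. ennreal (min (real K) \<bar>\<pi> (V' \<omega> t)\<bar>) \<partial>N)"
      unfolding eq by (rule nn_integral_monotone_convergence_SUP) (auto simp: incseq_def le_fun_def intro!: ennreal_leI)
    also have "\<dots> \<le> ennreal C"
    proof (rule SUP_least)
      fix K :: nat
      have "(\<integral>\<^sup>+\<omega>. ennreal (min (real K) \<bar>\<pi> (V' \<omega> t)\<bar>) \<partial>N) = ennreal (\<integral>\<omega>. min (real K) \<bar>\<pi> (V' \<omega> t)\<bar> \<partial>N)"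
        by (rule nn_integral_eq_integral) (auto intro!: pN.integrable_const_bound[where B="real K"])
      also have "\<dots> \<le> ennreal C" using bnd[of "real K"] by (auto intro: ennreal_leI)
      finally show "(\<integral>\<^sup>+\<omega>. ennreal (min (real K) \<bar>\<pi> (V' \<omega> t)\<bar>) \<partial>N) \<le> ennreal C" .
    qed
    finally have le: "(\<integral>\<^sup>+\<omega>. ennreal (norm (\<pi> (V' \<omega> t))) \<partial>N) \<le> ennreal C" .
    show "(\<integral>\<^sup>+\<omega>. ennreal (norm (\<pi> (V' \<omega> t))) \<partial>N) < \<infinity>"
      using le_less_trans[OF le ennreal_less_top] by (simp only: infinity_ennreal_def)
  qed (rule mN)
qed

end

definition trunc :: "real \<Rightarrow> real \<Rightarrow> real" where "trunc K x = max (-K) (min K x)"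

lemma trunc_bnd: "K \<ge> 0 \<Longrightarrow> \<bar>trunc K x\<bar> \<le> K" by (auto simp: trunc_def)
lemma trunc_lip: "K \<ge> 0 \<Longrightarrow> \<bar>trunc K x - trunc K y\<bar> \<le> min (2*K) \<bar>x - y\<bar>" by (auto simp: trunc_def)
lemma trunc_tail: "K \<ge> 0 \<Longrightarrow> \<bar>trunc K x - x\<bar> \<le> \<bar>x\<bar> * indicator {x. \<bar>x\<bar> > K} x" by (auto simp: trunc_def indicator_def)
lemma trunc_id: "\<bar>x\<bar> \<le> K \<Longrightarrow> trunc K x = x" by (auto simp: trunc_def)
lemma trunc_abs_le: "K \<ge> 0 \<Longrightarrow> \<bar>trunc K x\<bar> \<le> \<bar>x\<bar>" by (auto simp: trunc_def)
lemma trunc_tendsto: "(f \<longlongrightarrow> l) F \<Longrightarrow> ((\<lambda>x. trunc K (f x)) \<longlongrightarrow> trunc K l) F"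
  unfolding trunc_def by (intro tendsto_intros)
lemma trunc_meas[measurable]: "trunc K \<in> borel_measurable borel"
  unfolding trunc_def by measurable

definition Gfun :: "nat \<Rightarrow> (nat \<Rightarrow> real) \<Rightarrow> (nat \<Rightarrow> 'e::topological_space \<Rightarrow> real) \<Rightarrow> (real \<Rightarrow> 'e) \<Rightarrow> real" where
  "Gfun m us gs v = (\<Prod>i<m. gs i (v (us i)))"

lemma Gfun_meas:
  assumes gm: "\<And>i. i < m \<Longrightarrow> gs i \<in> borel_measurable borel"
    and fm: "\<And>i. i < m \<Longrightarrow> (\<lambda>\<omega>. f \<omega> (us i)) \<in> borel_measurable A"
  shows "(\<lambda>\<omega>. Gfun m us gs (f \<omega>)) \<in> borel_measurable A"
  unfolding Gfun_def
proof (rule borel_measurable_prod)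
  fix i assume "i \<in> {..<m}"
  then have "gs i \<in> borel_measurable borel" using gm by auto
  then show "(\<lambda>\<omega>. gs i (f \<omega> (us i))) \<in> borel_measurable A"
    using \<open>i \<in> {..<m}\<close> by (intro measurable_compose[OF fm]) auto
qed

lemma Gfun01:
  assumes "\<And>i x. i < m \<Longrightarrow> 0 \<le> gs i x \<and> gs i x \<le> 1"
  shows "0 \<le> Gfun m us gs v \<and> Gfun m us gs v \<le> 1"
  using assms unfolding Gfun_def by (auto intro!: prod_nonneg prod_le_1)

lemma abs6: fixes x1 x2 x3 x4 x5 x6 :: real shows "\<bar>x1 - x2 + x3 - x4 + x5 - x6\<bar> \<le> \<bar>x1\<bar>+\<bar>x2\<bar>+\<bar>x3\<bar>+\<bar>x4\<bar>+\<bar>x5\<bar>+\<bar>x6\<bar>"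
  by arith

lemma lin6: fixes p1 p2 p3 p4 p5 p6 q1 q2 r1 r2 w :: real
  shows "p1 \<le> q1 \<Longrightarrow> p2 \<le> q2 \<Longrightarrow> p3 \<le> r1 \<Longrightarrow> p4 \<le> r2 \<Longrightarrow> p5 \<le> r1 + w \<Longrightarrow> p6 \<le> r2 + w \<Longrightarrow>
    p1+p2+p3+p4+p5+p6 \<le> q1 + q2 + 2*r1 + 2*r2 + 2*w"
  by linarith

lemma ptwise:
  fixes K G Gc S a b zt zs :: real
  assumes K: "K \<ge> 0" and G: "0 \<le> G" "G \<le> 1" and Gc: "0 \<le> Gc" "Gc \<le> 1" and S: "\<bar>G - Gc\<bar> \<le> S"
  shows "\<bar>(trunc K a - trunc K b) * G - (zt - zs) * Gc\<bar> \<le>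
     min (2*K) \<bar>a - zt\<bar> + min (2*K) \<bar>b - zs\<bar> + 2 * (\<bar>zt\<bar> * indicator {x. \<bar>x\<bar> > K} zt)
       + 2 * (\<bar>zs\<bar> * indicator {x. \<bar>x\<bar> > K} zs) + 2 * K * S"
proof -
  have eq: "(trunc K a - trunc K b) * G - (zt - zs) * Gc =
     (trunc K a - trunc K zt) * G - (trunc K b - trunc K zs) * G + (trunc K zt - zt) * G - (trunc K zs - zs) * G
     + zt * (G - Gc) - zs * (G - Gc)"
    by (simp add: algebra_simps)
  have A: "\<bar>(trunc K x - trunc K y) * G\<bar> \<le> min (2*K) \<bar>x - y\<bar>" for x y
  proof -
    have "\<bar>(trunc K x - trunc K y) * G\<bar> = \<bar>trunc K x - trunc K y\<bar> * G" using G by (simp add: abs_mult)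
    also have "\<dots> \<le> min (2*K) \<bar>x - y\<bar> * 1" using trunc_lip[OF K, of x y] G by (intro mult_mono) auto
    finally show ?thesis by simp
  qed
  have B: "\<bar>(trunc K z - z) * G\<bar> \<le> \<bar>z\<bar> * indicator {x. \<bar>x\<bar> > K} z" for z
  proof -
    have "\<bar>(trunc K z - z) * G\<bar> = \<bar>trunc K z - z\<bar> * G" using G by (simp add: abs_mult)
    also have "\<dots> \<le> (\<bar>z\<bar> * indicator {x. \<bar>x\<bar> > K} z) * 1" using trunc_tail[OF K, of z] G
      by (intro mult_mono) (auto simp: indicator_def)
    finally show ?thesis by simp
  qed
  have G1: "\<bar>G - Gc\<bar> \<le> 1" using G Gc by auto
  have C: "\<bar>z * (G - Gc)\<bar> \<le> \<bar>z\<bar> * indicator {x. \<bar>x\<bar> > K} z + K * S" for z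
  proof (cases "\<bar>z\<bar> > K")
    case True
    have "\<bar>z * (G - Gc)\<bar> \<le> \<bar>z\<bar> * 1" unfolding abs_mult using G1 by (intro mult_left_mono) auto
    moreover have "0 \<le> K * S" using K S by (intro mult_nonneg_nonneg) auto
    ultimately show ?thesis using True by (simp add: indicator_def)
  next
    case False
    have "\<bar>z * (G - Gc)\<bar> \<le> K * S" unfolding abs_mult using False S K by (intro mult_mono) auto
    then show ?thesis using False by (simp add: indicator_def)
  qed
  show ?thesis unfolding eq
  proof (rule order.trans[OF abs6])
    show "\<bar>(trunc K a - trunc K zt) * G\<bar> + \<bar>(trunc K b - trunc K zs) * G\<bar> + \<bar>(trunc K zt - zt) * G\<bar> +
          \<bar>(trunc K zs - zs) * G\<bar> + \<bar>zt * (G - Gc)\<bar> + \<bar>zs * (G - Gc)\<bar> \<le>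
      min (2*K) \<bar>a - zt\<bar> + min (2*K) \<bar>b - zs\<bar> + 2 * (\<bar>zt\<bar> * indicator {x. \<bar>x\<bar> > K} zt)
       + 2 * (\<bar>zs\<bar> * indicator {x. \<bar>x\<bar> > K} zs) + 2 * K * S"
      using lin6[OF A[of a zt] A[of b zs] B[of zt] B[of zs] C[of zt] C[of zs]] by (simp only: mult.assoc)
  qed
qed

lemma inprob_cmult:
  assumes "inprob M Y" "c \<ge> 0"
  shows "inprob M (\<lambda>n \<omega>. c * Y n \<omega>)"
proof (cases "c = 0")
  case True then show ?thesis by (simp add: inprob_zero)
next
  case False
  then have c: "c > 0" using assms by auto
  show ?thesis unfolding inprob_def
  proof (intro allI impI)
    fix e :: real assume e: "e > 0"
    have "(\<lambda>n. measure (M n) {\<omega>\<in>space (M n). Y n \<omega> > e / c}) \<longlonglongrightarrow> 0"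
      using assms(1) e c unfolding inprob_def by auto
    moreover have "{\<omega>\<in>space (M n). c * Y n \<omega> > e} = {\<omega>\<in>space (M n). Y n \<omega> > e / c}" for n
      using c by (auto simp: field_simps)
    ultimately show "(\<lambda>n. measure (M n) {\<omega>\<in>space (M n). c * Y n \<omega> > e}) \<longlonglongrightarrow> 0" by simp
  qed
qed

context wlim
begin

lemma core:
  fixes us :: "nat \<Rightarrow> real" and gs :: "nat \<Rightarrow> 'e \<Rightarrow> real"
  assumes s0: "0 \<le> s" and st: "s \<le> t"
    and us: "\<And>i. i < m \<Longrightarrow> 0 \<le> us i \<and> us i \<le> s"
    and g01: "\<And>i x. i < m \<Longrightarrow> 0 \<le> gs i x \<and> gs i x \<le> 1"
    and gL: "\<And>i x y. i < m \<Longrightarrow> \<bar>gs i x - gs i y\<bar> \<le> L * dist x y"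
    and gc: "\<And>i. i < m \<Longrightarrow> continuous_on UNIV (gs i)"
    and L0: "L \<ge> 0"
  shows "(\<integral>\<omega>. (\<pi> (V' \<omega> t) - \<pi> (V' \<omega> s)) * (\<Prod>i<m. gs i (V' \<omega> (us i))) \<partial>N) = 0"
proof -
  interpret pN: prob_space N by (rule PN)
  have t0: "0 \<le> t" using s0 st by linarith
  define G where "G = Gfun m us gs"
  have G01: "0 \<le> G v \<and> G v \<le> 1" for v
    unfolding G_def by (rule Gfun01[OF g01])
  have gm: "gs i \<in> borel_measurable borel" if "i < m" for i
    using gc[OF that] by (rule borel_measurable_continuous_onI)
  have Gtends: "(\<lambda>n. G (xs n)) \<longlonglongrightarrow> G x" if "\<And>u. u \<ge> 0 \<Longrightarrow> (\<lambda>n. xs n u) \<longlonglongrightarrow> x u" for xs x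
    unfolding G_def Gfun_def
  proof (rule tendsto_prod)
    fix i assume i: "i \<in> {..<m}"
    have ic: "isCont (gs i) (x (us i))" using gc i by (simp add: continuous_on_eq_continuous_at)
    show "(\<lambda>n. gs i (xs n (us i))) \<longlonglongrightarrow> gs i (x (us i))"
      using isCont_tendsto_compose[OF ic that[of "us i"]] us i by auto
  qed
  have Gdep: "G x = G y" if "\<forall>u\<ge>0. x u = y u" for x y
    using that us unfolding G_def Gfun_def by (intro prod.cong) auto
  define FK where "FK = (\<lambda>K (v::real\<Rightarrow>'e). (trunc K (\<pi> (v t)) - trunc K (\<pi> (v s))) * G v)"
  have FKbc: "bc_functional (FK K)" if K: "K \<ge> 0" for K
  proof (rule bcf_intro[where B="2*K"])
    show "FK K x = FK K y" if "\<forall>t\<ge>0. x t = y t" for x y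
      using that s0 t0 Gdep[OF that] by (simp add: FK_def)
    show "\<bar>FK K x\<bar> \<le> 2 * K" for x
    proof -
      have a: "\<bar>trunc K (\<pi> (x t)) - trunc K (\<pi> (x s))\<bar> \<le> 2*K"
        using trunc_bnd[OF K, of "\<pi> (x t)"] trunc_bnd[OF K, of "\<pi> (x s)"] by linarith
      have "\<bar>FK K x\<bar> = \<bar>trunc K (\<pi> (x t)) - trunc K (\<pi> (x s))\<bar> * G x"
        using G01[of x] by (simp add: FK_def abs_mult)
      also have "\<dots> \<le> 2*K * 1" using a G01[of x] K by (intro mult_mono) auto
      finally show ?thesis by simp
    qed
    show "(\<lambda>n. FK K (xs n)) \<longlonglongrightarrow> FK K x" if "\<And>u. u \<ge> 0 \<Longrightarrow> (\<lambda>n. xs n u) \<longlonglongrightarrow> x u" for xs x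
      unfolding FK_def using that[OF t0] that[OF s0] Gtends[OF that]
      by (intro tendsto_intros trunc_tendsto pi_tendsto)
  qed
  have FKbnd: "\<bar>FK K x\<bar> \<le> 2 * K" if K: "K \<ge> 0" for K x
  proof -
    have a: "\<bar>trunc K (\<pi> (x t)) - trunc K (\<pi> (x s))\<bar> \<le> 2*K"
      using trunc_bnd[OF K, of "\<pi> (x t)"] trunc_bnd[OF K, of "\<pi> (x s)"] by linarith
    have "\<bar>FK K x\<bar> = \<bar>trunc K (\<pi> (x t)) - trunc K (\<pi> (x s))\<bar> * G x"
      using G01[of x] by (simp add: FK_def abs_mult)
    also have "\<dots> \<le> 2*K * 1" using a G01[of x] K by (intro mult_mono) auto
    finally show ?thesis by simp
  qed
  define Y1 where "Y1 = (\<lambda>K n \<omega>. min (2*K) \<bar>\<pi> (V n \<omega> t) - Zc n \<omega> t\<bar>)"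
  define Y2 where "Y2 = (\<lambda>K n \<omega>. min (2*K) \<bar>\<pi> (V n \<omega> s) - Zc n \<omega> s\<bar>)"
  define Yg where "Yg = (\<lambda>i n \<omega>. min 1 (L * norm (V n \<omega> (us i) - Vc n \<omega> (us i))))"
  define Tl where "Tl = (\<lambda>u K n \<omega>. \<bar>Zc n \<omega> u\<bar> * indicator {x. \<bar>x\<bar> > K} (Zc n \<omega> u))"
  define eK where "eK = (\<lambda>K n. (\<integral>\<omega>. Y1 K n \<omega> \<partial>M n) + (\<integral>\<omega>. Y2 K n \<omega> \<partial>M n) + 2*K*(\<Sum>i<m. \<integral>\<omega>. Yg i n \<omega> \<partial>M n))"
  have pre: "\<bar>\<integral>\<omega>. FK K (V n \<omega>) \<partial>M n\<bar> \<le> eK K n + 2 * (\<integral>\<omega>. Tl t K n \<omega> \<partial>M n) + 2 * (\<integral>\<omega>. Tl s K n \<omega> \<partial>M n)"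
    if K: "K \<ge> 0" for K n
  proof -
    interpret p: prob_space "M n" by (rule P)
    have [measurable]: "(\<lambda>\<omega>. V n \<omega> u) \<in> borel_measurable (M n)" for u by (rule Vm)
    have [measurable]: "(\<lambda>\<omega>. Vc n \<omega> u) \<in> borel_measurable (M n)" for u by (rule Vcm)
    have [measurable]: "(\<lambda>\<omega>. Zc n \<omega> u) \<in> borel_measurable (M n)" for u by (rule Zm)
    define Gc where "Gc = (\<lambda>\<omega>. G (Vc n \<omega>))"
    define Gv where "Gv = (\<lambda>\<omega>. G (V n \<omega>))"
    have Gcm[measurable]: "Gc \<in> borel_measurable (M n)"
      unfolding Gc_def G_def by (rule Gfun_meas) (use gm in auto)
    have Gvm[measurable]: "Gv \<in> borel_measurable (M n)"
      unfolding Gv_def G_def by (rule Gfun_meas) (use gm in auto)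
    have FKm: "(\<lambda>\<omega>. FK K (V n \<omega>)) \<in> borel_measurable (M n)"
      using Gvm unfolding FK_def Gv_def by measurable
    have iF: "integrable (M n) (\<lambda>\<omega>. FK K (V n \<omega>))"
      by (rule p.integrable_const_bound[where B="2*K"]) (use FKbnd[OF K] FKm in auto)
    have iZt: "integrable (M n) (\<lambda>\<omega>. Zc n \<omega> t)" by (rule Zi[OF t0])
    have iZs: "integrable (M n) (\<lambda>\<omega>. Zc n \<omega> s)" by (rule Zi[OF s0])
    have iZG: "integrable (M n) (\<lambda>\<omega>. (Zc n \<omega> t - Zc n \<omega> s) * Gc \<omega>)"
    proof (rule Bochner_Integration.integrable_bound[where f="\<lambda>\<omega>. Zc n \<omega> t - Zc n \<omega> s"])
      show "integrable (M n) (\<lambda>\<omega>. Zc n \<omega> t - Zc n \<omega> s)" using iZt iZs by auto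
      show "AE \<omega> in M n. norm ((Zc n \<omega> t - Zc n \<omega> s) * Gc \<omega>) \<le> norm (Zc n \<omega> t - Zc n \<omega> s)"
      proof (rule AE_I2)
        fix \<omega> have "\<bar>Zc n \<omega> t - Zc n \<omega> s\<bar> * \<bar>Gc \<omega>\<bar> \<le> \<bar>Zc n \<omega> t - Zc n \<omega> s\<bar> * 1"
          using G01[of "Vc n \<omega>"] by (intro mult_left_mono) (auto simp: Gc_def)
        then show "norm ((Zc n \<omega> t - Zc n \<omega> s) * Gc \<omega>) \<le> norm (Zc n \<omega> t - Zc n \<omega> s)"
          by (simp add: abs_mult)
      qed
    qed measurable
    define gens where "gens = (\<Union>u\<in>{0..s}. {(\<lambda>\<omega>. Vc n \<omega> u) -` A \<inter> space (M n) | A. A \<in> sets borel})"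
    have nf: "nat_filt (M n) (Vc n) s = sigma_sets (space (M n)) gens"
      unfolding nat_filt_def gens_def by simp
    have gens_sets: "gens \<subseteq> sets (M n)"
      unfolding gens_def by (auto intro: measurable_sets[OF Vcm])
    have mart0: "(\<integral>\<omega>. Gc \<omega> * (Zc n \<omega> t - Zc n \<omega> s) \<partial>M n) = 0"
    proof (rule mart_fun[OF P gens_sets, where B=1])
      show "integrable (M n) (\<lambda>\<omega>. Zc n \<omega> t - Zc n \<omega> s)" using iZt iZs by auto
      show "(\<integral>\<omega>. indicator A \<omega> * (Zc n \<omega> t - Zc n \<omega> s) \<partial>M n) = 0"
        if "A \<in> sigma_sets (space (M n)) gens" for A
        using Mt[OF s0 st, of A n] that nf by simp
      show "\<bar>Gc \<omega>\<bar> \<le> 1" for \<omega> using G01[of "Vc n \<omega>"] by (auto simp: Gc_def)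
      show "Gc \<in> borel_measurable (sigma (space (M n)) gens)"
        unfolding Gc_def G_def
      proof (rule Gfun_meas)
        show "gs i \<in> borel_measurable borel" if "i < m" for i using gm that .
        fix i assume i: "i < m"
        show "(\<lambda>\<omega>. Vc n \<omega> (us i)) \<in> borel_measurable (sigma (space (M n)) gens)"
        proof (rule measurableI)
          have gP: "gens \<subseteq> Pow (space (M n))" using gens_sets sets.sets_into_space by auto
          show "x \<in> space (sigma (space (M n)) gens) \<Longrightarrow> Vc n x (us i) \<in> space borel" for x by simp
          fix A :: "'e set" assume "A \<in> sets borel"
          then have "(\<lambda>\<omega>. Vc n \<omega> (us i)) -` A \<inter> space (M n) \<in> {(\<lambda>\<omega>. Vc n \<omega> (us i)) -` A \<inter> space (M n) | A. A \<in> sets borel}"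
            by blast
          then have "(\<lambda>\<omega>. Vc n \<omega> (us i)) -` A \<inter> space (M n) \<in> gens"
            unfolding gens_def by (rule UN_I[rotated]) (use us[OF i] in auto)
          then show "(\<lambda>\<omega>. Vc n \<omega> (us i)) -` A \<inter> space (sigma (space (M n)) gens) \<in> sets (sigma (space (M n)) gens)"
            using gP by (auto simp: sets_measure_of space_measure_of_conv intro: sigma_sets.Basic)
        qed
      qed
    qed
    have iY1: "integrable (M n) (Y1 K n)"
      by (rule p.integrable_const_bound[where B="2*K"]) (use K in \<open>auto simp: Y1_def\<close>)
    have iY2: "integrable (M n) (Y2 K n)"
      by (rule p.integrable_const_bound[where B="2*K"]) (use K in \<open>auto simp: Y2_def\<close>)
    have iYg: "integrable (M n) (Yg i n)" for i
      by (rule p.integrable_const_bound[where B="1"]) (use L0 in \<open>auto simp: Yg_def\<close>)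
    have iTl: "integrable (M n) (Tl u K n)" if "u \<ge> 0" for u
      by (rule Bochner_Integration.integrable_bound[OF integrable_abs[OF Zi[OF that]]])
         (auto simp: Tl_def indicator_def)
    define R where "R = (\<lambda>\<omega>. Y1 K n \<omega> + Y2 K n \<omega> + 2 * Tl t K n \<omega> + 2 * Tl s K n \<omega> + 2 * K * (\<Sum>i<m. Yg i n \<omega>))"
    have iR: "integrable (M n) R"
      unfolding R_def using iY1 iY2 iTl[OF t0] iTl[OF s0] iYg by auto
    have intR: "(\<integral>\<omega>. R \<omega> \<partial>M n) = eK K n + 2 * (\<integral>\<omega>. Tl t K n \<omega> \<partial>M n) + 2 * (\<integral>\<omega>. Tl s K n \<omega> \<partial>M n)"
      unfolding R_def eK_def using iY1 iY2 iTl[OF t0] iTl[OF s0] iYg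
      by (simp add: Bochner_Integration.integral_add Bochner_Integration.integral_sum)
    have ptw: "\<bar>FK K (V n \<omega>) - (Zc n \<omega> t - Zc n \<omega> s) * Gc \<omega>\<bar> \<le> R \<omega>" for \<omega>
    proof -
      have "\<bar>Gv \<omega> - Gc \<omega>\<bar> \<le> (\<Sum>i<m. \<bar>gs i (V n \<omega> (us i)) - gs i (Vc n \<omega> (us i))\<bar>)"
        unfolding Gv_def Gc_def G_def Gfun_def by (rule prod_diff_le) (use g01 in auto)
      also have "\<dots> \<le> (\<Sum>i<m. Yg i n \<omega>)"
      proof (rule sum_mono)
        fix i assume "i \<in> {..<m}"
        then have i: "i < m" by auto
        have "\<bar>gs i (V n \<omega> (us i)) - gs i (Vc n \<omega> (us i))\<bar> \<le> 1"
          using g01[OF i, of "V n \<omega> (us i)"] g01[OF i, of "Vc n \<omega> (us i)"] by auto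
        moreover have "\<bar>gs i (V n \<omega> (us i)) - gs i (Vc n \<omega> (us i))\<bar> \<le> L * norm (V n \<omega> (us i) - Vc n \<omega> (us i))"
          using gL[OF i] by (simp add: dist_norm)
        ultimately show "\<bar>gs i (V n \<omega> (us i)) - gs i (Vc n \<omega> (us i))\<bar> \<le> Yg i n \<omega>"
          by (simp add: Yg_def)
      qed
      finally have S: "\<bar>Gv \<omega> - Gc \<omega>\<bar> \<le> (\<Sum>i<m. Yg i n \<omega>)" .
      show ?thesis
        using ptwise[OF K _ _ _ _ S, of "\<pi> (V n \<omega> t)" "\<pi> (V n \<omega> s)" "Zc n \<omega> t" "Zc n \<omega> s"]
          G01[of "V n \<omega>"] G01[of "Vc n \<omega>"]
        by (simp add: FK_def R_def Y1_def Y2_def Tl_def Gv_def Gc_def)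
    qed
    have "\<bar>\<integral>\<omega>. FK K (V n \<omega>) \<partial>M n\<bar> = \<bar>(\<integral>\<omega>. FK K (V n \<omega>) \<partial>M n) - (\<integral>\<omega>. (Zc n \<omega> t - Zc n \<omega> s) * Gc \<omega> \<partial>M n)\<bar>"
      using mart0 by (simp add: mult.commute)
    also have "\<dots> = \<bar>\<integral>\<omega>. FK K (V n \<omega>) - (Zc n \<omega> t - Zc n \<omega> s) * Gc \<omega> \<partial>M n\<bar>"
      using iF iZG by (subst Bochner_Integration.integral_diff) auto
    also have "\<dots> \<le> (\<integral>\<omega>. \<bar>FK K (V n \<omega>) - (Zc n \<omega> t - Zc n \<omega> s) * Gc \<omega>\<bar> \<partial>M n)"
      by (rule integral_abs_bound)
    also have "\<dots> \<le> (\<integral>\<omega>. R \<omega> \<partial>M n)"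
      by (rule integral_mono) (use iF iZG iR ptw in auto)
    finally show ?thesis using intR by simp
  qed
  have eK0: "(\<lambda>n. eK K n) \<longlonglongrightarrow> 0" if K: "K \<ge> 0" for K
  proof -
    have Vmu[measurable]: "(\<lambda>\<omega>. V n \<omega> u) \<in> borel_measurable (M n)" for n u by (rule Vm)
    have Vcmu[measurable]: "(\<lambda>\<omega>. Vc n \<omega> u) \<in> borel_measurable (M n)" for n u by (rule Vcm)
    have Zmu[measurable]: "(\<lambda>\<omega>. Zc n \<omega> u) \<in> borel_measurable (M n)" for n u by (rule Zm)
    have l1: "(\<lambda>n. \<integral>\<omega>. Y1 K n \<omega> \<partial>M n) \<longlonglongrightarrow> 0"
    proof (rule bounded_inprob_L1[OF P, where B="2*K"])
      show "Y1 K n \<in> borel_measurable (M n)" for n unfolding Y1_def by measurable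
      show "0 \<le> Y1 K n \<omega> \<and> Y1 K n \<omega> \<le> 2*K" for n \<omega> using K by (auto simp: Y1_def)
      have "inprob M (Y1 K)"
        by (rule inprob_mono[OF P _ _ _ Zp[OF t0]]) (auto simp: Y1_def)
      then show "\<And>e. e > 0 \<Longrightarrow> (\<lambda>n. measure (M n) {\<omega>\<in>space (M n). Y1 K n \<omega> > e}) \<longlonglongrightarrow> 0"
        unfolding inprob_def by auto
    qed
    have l2: "(\<lambda>n. \<integral>\<omega>. Y2 K n \<omega> \<partial>M n) \<longlonglongrightarrow> 0"
    proof (rule bounded_inprob_L1[OF P, where B="2*K"])
      show "Y2 K n \<in> borel_measurable (M n)" for n unfolding Y2_def by measurable
      show "0 \<le> Y2 K n \<omega> \<and> Y2 K n \<omega> \<le> 2*K" for n \<omega> using K by (auto simp: Y2_def)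
      have "inprob M (Y2 K)"
        by (rule inprob_mono[OF P _ _ _ Zp[OF s0]]) (auto simp: Y2_def)
      then show "\<And>e. e > 0 \<Longrightarrow> (\<lambda>n. measure (M n) {\<omega>\<in>space (M n). Y2 K n \<omega> > e}) \<longlonglongrightarrow> 0"
        unfolding inprob_def by auto
    qed
    have lg: "(\<lambda>n. \<integral>\<omega>. Yg i n \<omega> \<partial>M n) \<longlonglongrightarrow> 0" if i: "i < m" for i
    proof (rule bounded_inprob_L1[OF P, where B="1"])
      show "Yg i n \<in> borel_measurable (M n)" for n unfolding Yg_def by measurable
      show "0 \<le> Yg i n \<omega> \<and> Yg i n \<omega> \<le> 1" for n \<omega> using L0 by (auto simp: Yg_def)
      have ui0: "us i \<ge> 0" using us[OF i] by auto
      have "inprob M (Yg i)"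
        by (rule inprob_mono[OF P _ _ _ inprob_cmult[OF Vp[OF ui0] L0]]) (auto simp: Yg_def)
      then show "\<And>e. e > 0 \<Longrightarrow> (\<lambda>n. measure (M n) {\<omega>\<in>space (M n). Yg i n \<omega> > e}) \<longlonglongrightarrow> 0"
        unfolding inprob_def by auto
    qed
    have "(\<lambda>n. \<Sum>i<m. \<integral>\<omega>. Yg i n \<omega> \<partial>M n) \<longlonglongrightarrow> (\<Sum>i<m. 0)"
      by (rule tendsto_sum) (use lg in auto)
    then have "(\<lambda>n. eK K n) \<longlonglongrightarrow> 0 + 0 + 2*K*(\<Sum>i<m. 0::real)"
      unfolding eK_def by (rule tendsto_add[OF tendsto_add[OF l1 l2] tendsto_mult[OF tendsto_const]])
    then show ?thesis by simp
  qed
  have small: "\<exists>K0. \<forall>K\<ge>K0. \<bar>\<integral>\<omega>. FK K (V' \<omega>) \<partial>N\<bar> \<le> 4 * e" if e: "e > 0" for e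
  proof -
    obtain K1 where K1: "\<And>K n. K \<ge> K1 \<Longrightarrow> (\<integral>\<omega>. \<bar>Zc n \<omega> t\<bar> * indicator {\<omega>. \<bar>Zc n \<omega> t\<bar> > K} \<omega> \<partial>M n) \<le> e"
      using ui_tail[OF t0 e] by auto
    obtain K2 where K2: "\<And>K n. K \<ge> K2 \<Longrightarrow> (\<integral>\<omega>. \<bar>Zc n \<omega> s\<bar> * indicator {\<omega>. \<bar>Zc n \<omega> s\<bar> > K} \<omega> \<partial>M n) \<le> e"
      using ui_tail[OF s0 e] by auto
    have Tleq: "(\<lambda>\<omega>. Tl u K n \<omega>) = (\<lambda>\<omega>. \<bar>Zc n \<omega> u\<bar> * indicator {\<omega>. \<bar>Zc n \<omega> u\<bar> > K} \<omega>)" for u K n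
      by (auto simp: Tl_def indicator_def)
    show ?thesis
    proof (intro exI allI impI)
      fix K assume KK: "max (max K1 K2) 0 \<le> K"
      then have K: "K \<ge> 0" by auto
      have lim: "(\<lambda>n. \<integral>\<omega>. FK K (V n \<omega>) \<partial>M n) \<longlonglongrightarrow> (\<integral>\<omega>. FK K (V' \<omega>) \<partial>N)"
        by (rule cdI[OF FKbc[OF K]])
      have "\<bar>\<integral>\<omega>. FK K (V n \<omega>) \<partial>M n\<bar> \<le> eK K n + 4 * e" for n
      proof -
        have "(\<integral>\<omega>. Tl t K n \<omega> \<partial>M n) \<le> e" using K1[of K n] KK by (simp add: Tleq)
        moreover have "(\<integral>\<omega>. Tl s K n \<omega> \<partial>M n) \<le> e" using K2[of K n] KK by (simp add: Tleq)
        ultimately show ?thesis using pre[OF K, of n] by linarith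
      qed
      then show "\<bar>\<integral>\<omega>. FK K (V' \<omega>) \<partial>N\<bar> \<le> 4 * e"
        using LIMSEQ_le[OF tendsto_rabs[OF lim] tendsto_add[OF eK0[OF K] tendsto_const[of "4*e"]]] by auto
    qed
  qed
  have V'mu[measurable]: "(\<lambda>\<omega>. V' \<omega> u) \<in> borel_measurable N" for u by (rule V'm)
  have GN[measurable]: "(\<lambda>\<omega>. G (V' \<omega>)) \<in> borel_measurable N"
    unfolding G_def by (rule Gfun_meas) (use gm in auto)
  have dct: "(\<lambda>K::nat. \<integral>\<omega>. FK (real K) (V' \<omega>) \<partial>N) \<longlonglongrightarrow>
      (\<integral>\<omega>. (\<pi> (V' \<omega> t) - \<pi> (V' \<omega> s)) * G (V' \<omega>) \<partial>N)"
  proof (rule integral_dominated_convergence[where w="\<lambda>\<omega>. \<bar>\<pi> (V' \<omega> t)\<bar> + \<bar>\<pi> (V' \<omega> s)\<bar>"])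
    show "(\<lambda>\<omega>. (\<pi> (V' \<omega> t) - \<pi> (V' \<omega> s)) * G (V' \<omega>)) \<in> borel_measurable N" by measurable
    show "(\<lambda>\<omega>. FK (real K) (V' \<omega>)) \<in> borel_measurable N" for K unfolding FK_def by measurable
    show "integrable N (\<lambda>\<omega>. \<bar>\<pi> (V' \<omega> t)\<bar> + \<bar>\<pi> (V' \<omega> s)\<bar>)"
      using lim_integrable[OF t0] lim_integrable[OF s0] by auto
    show "AE \<omega> in N. (\<lambda>K. FK (real K) (V' \<omega>)) \<longlonglongrightarrow> (\<pi> (V' \<omega> t) - \<pi> (V' \<omega> s)) * G (V' \<omega>)"
    proof (rule AE_I2)
      fix \<omega>
      obtain K0 :: nat where K0: "\<bar>\<pi> (V' \<omega> t)\<bar> + \<bar>\<pi> (V' \<omega> s)\<bar> \<le> real K0" using real_arch_simple by blast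
      have "\<forall>\<^sub>F K in sequentially. FK (real K) (V' \<omega>) = (\<pi> (V' \<omega> t) - \<pi> (V' \<omega> s)) * G (V' \<omega>)"
        unfolding eventually_sequentially
      proof (intro exI allI impI)
        fix K assume "K0 \<le> K"
        then have "real K0 \<le> real K" by simp
        then show "FK (real K) (V' \<omega>) = (\<pi> (V' \<omega> t) - \<pi> (V' \<omega> s)) * G (V' \<omega>)"
          using K0 by (simp add: FK_def trunc_id)
      qed
      then show "(\<lambda>K. FK (real K) (V' \<omega>)) \<longlonglongrightarrow> (\<pi> (V' \<omega> t) - \<pi> (V' \<omega> s)) * G (V' \<omega>)"
        by (rule tendsto_eventually)
    qed
    show "AE \<omega> in N. norm (FK (real K) (V' \<omega>)) \<le> \<bar>\<pi> (V' \<omega> t)\<bar> + \<bar>\<pi> (V' \<omega> s)\<bar>" for K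
    proof (rule AE_I2)
      fix \<omega>
      have a: "\<bar>trunc (real K) (\<pi> (V' \<omega> t)) - trunc (real K) (\<pi> (V' \<omega> s))\<bar> \<le> \<bar>\<pi> (V' \<omega> t)\<bar> + \<bar>\<pi> (V' \<omega> s)\<bar>"
        using trunc_abs_le[of "real K" "\<pi> (V' \<omega> t)"] trunc_abs_le[of "real K" "\<pi> (V' \<omega> s)"] by linarith
      have "norm (FK (real K) (V' \<omega>)) = \<bar>trunc (real K) (\<pi> (V' \<omega> t)) - trunc (real K) (\<pi> (V' \<omega> s))\<bar> * G (V' \<omega>)"
        using G01[of "V' \<omega>"] by (simp add: FK_def abs_mult)
      also have "\<dots> \<le> (\<bar>\<pi> (V' \<omega> t)\<bar> + \<bar>\<pi> (V' \<omega> s)\<bar>) * 1"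
        using a G01[of "V' \<omega>"] by (intro mult_mono) auto
      finally show "norm (FK (real K) (V' \<omega>)) \<le> \<bar>\<pi> (V' \<omega> t)\<bar> + \<bar>\<pi> (V' \<omega> s)\<bar>" by simp
    qed
  qed
  have H: "\<bar>\<integral>\<omega>. (\<pi> (V' \<omega> t) - \<pi> (V' \<omega> s)) * G (V' \<omega>) \<partial>N\<bar> \<le> 4 * e" if e: "e > 0" for e
  proof -
    obtain K0 where K0: "\<And>K. K \<ge> K0 \<Longrightarrow> \<bar>\<integral>\<omega>. FK K (V' \<omega>) \<partial>N\<bar> \<le> 4 * e" using small[OF e] by auto
    obtain k0 :: nat where "K0 \<le> real k0" using real_arch_simple by blast
    then have ev: "\<forall>\<^sub>F K in sequentially. \<bar>\<integral>\<omega>. FK (real K) (V' \<omega>) \<partial>N\<bar> \<le> 4 * e"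
      unfolding eventually_sequentially by (intro exI[of _ k0] allI impI K0) auto
    show ?thesis by (rule tendsto_upperbound[OF tendsto_rabs[OF dct] ev]) simp
  qed
  have "\<bar>\<integral>\<omega>. (\<pi> (V' \<omega> t) - \<pi> (V' \<omega> s)) * G (V' \<omega>) \<partial>N\<bar> \<le> 0"
  proof (rule field_le_epsilon)
    fix e :: real assume "0 < e"
    then show "\<bar>\<integral>\<omega>. (\<pi> (V' \<omega> t) - \<pi> (V' \<omega> s)) * G (V' \<omega>) \<partial>N\<bar> \<le> 0 + e"
      using H[of "e/4"] by simp
  qed
  then show ?thesis by (simp add: G_def Gfun_def)
qed

end

definition apx :: "nat \<Rightarrow> 'e::metric_space set \<Rightarrow> 'e \<Rightarrow> real" where
  "apx j U x = (if U = UNIV then 1 else min 1 (real j * infdist x (- U)))"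

lemma apx01: "0 \<le> apx j U x \<and> apx j U x \<le> 1"
  by (auto simp: apx_def infdist_nonneg)

lemma apx_lip: "\<bar>apx j U x - apx j U y\<bar> \<le> real j * dist x y"
proof (cases "U = UNIV")
  case True then show ?thesis by (simp add: apx_def)
next
  case False
  have "\<bar>min 1 (real j * infdist x (- U)) - min 1 (real j * infdist y (- U))\<bar> \<le>
        \<bar>real j * infdist x (- U) - real j * infdist y (- U)\<bar>" by (auto simp: min_def)
  also have "\<dots> = real j * \<bar>infdist x (- U) - infdist y (- U)\<bar>"
    by (simp add: abs_mult right_diff_distrib[symmetric])
  also have "\<dots> \<le> real j * dist x y" by (intro mult_left_mono infdist_triangle_abs) auto
  finally show ?thesis using False by (simp add: apx_def)
qed

lemma apx_cont: "continuous_on UNIV (apx j U)"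
proof (cases "U = UNIV")
  case True then show ?thesis by (simp add: apx_def[abs_def])
next
  case False then show ?thesis unfolding apx_def[abs_def] by (simp add: continuous_intros)
qed

lemma apx_lim:
  assumes "open U"
  shows "(\<lambda>j. apx j U x) \<longlonglongrightarrow> indicator U x"
proof (cases "U = UNIV")
  case True then show ?thesis by (simp add: apx_def)
next
  case NU: False
  show ?thesis
  proof (cases "x \<in> U")
    case True
    have "infdist x (- U) > 0"
      using NU True assms by (intro infdist_pos_not_in_closed) auto
    then obtain j0 :: nat where j0: "1 / infdist x (- U) \<le> real j0" using real_arch_simple by blast
    have "\<forall>\<^sub>F j in sequentially. apx j U x = 1"
      unfolding eventually_sequentially
    proof (intro exI allI impI)
      fix j assume "j0 \<le> j"
      then have "1 / infdist x (- U) \<le> real j" using j0 by (meson of_nat_le_iff order.trans)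
      then have "1 \<le> real j * infdist x (- U)" using \<open>infdist x (- U) > 0\<close> by (simp add: field_simps)
      then show "apx j U x = 1" using NU by (simp add: apx_def)
    qed
    then show ?thesis using True by (simp add: tendsto_eventually)
  next
    case False
    then show ?thesis using NU by (simp add: apx_def)
  qed
qed

context wlim
begin

lemma gen_ind:
  fixes m :: nat and us :: "nat \<Rightarrow> real" and Os :: "nat \<Rightarrow> 'e set"
  assumes s0: "0 \<le> s" and st: "s \<le> t"
    and uO: "\<And>i. i < m \<Longrightarrow> 0 \<le> us i \<and> us i \<le> s \<and> open (Os i)"
  shows "(\<integral>\<omega>. (\<pi> (V' \<omega> t) - \<pi> (V' \<omega> s)) * (\<Prod>i<m. indicator (Os i) (V' \<omega> (us i))) \<partial>N) = 0"
proof -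
  interpret pN: prob_space N by (rule PN)
  have t0: "0 \<le> t" using s0 st by linarith
  have V'mu[measurable]: "(\<lambda>\<omega>. V' \<omega> u) \<in> borel_measurable N" for u by (rule V'm)
  have zero: "(\<integral>\<omega>. (\<pi> (V' \<omega> t) - \<pi> (V' \<omega> s)) * (\<Prod>i<m. apx j (Os i) (V' \<omega> (us i))) \<partial>N) = 0" for j
    by (rule core[OF s0 st, where L="real j" and gs="\<lambda>i. apx j (Os i)" and us=us and m=m]) (use uO apx01 apx_lip apx_cont in auto)
  have "(\<lambda>j. \<integral>\<omega>. (\<pi> (V' \<omega> t) - \<pi> (V' \<omega> s)) * (\<Prod>i<m. apx j (Os i) (V' \<omega> (us i))) \<partial>N) \<longlonglongrightarrow>
        (\<integral>\<omega>. (\<pi> (V' \<omega> t) - \<pi> (V' \<omega> s)) * (\<Prod>i<m. indicator (Os i) (V' \<omega> (us i))) \<partial>N)"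
  proof (rule integral_dominated_convergence[where w="\<lambda>\<omega>. \<bar>\<pi> (V' \<omega> t) - \<pi> (V' \<omega> s)\<bar>"])
    have "(\<lambda>\<omega>. Gfun m us (\<lambda>i. indicator (Os i)) (V' \<omega>)) \<in> borel_measurable N"
      by (rule Gfun_meas) (use uO in \<open>auto intro!: borel_measurable_indicator\<close>)
    then show "(\<lambda>\<omega>. (\<pi> (V' \<omega> t) - \<pi> (V' \<omega> s)) * (\<Prod>i<m. indicator (Os i) (V' \<omega> (us i)))) \<in> borel_measurable N"
      unfolding Gfun_def by measurable
    fix j
    have "(\<lambda>\<omega>. Gfun m us (\<lambda>i. apx j (Os i)) (V' \<omega>)) \<in> borel_measurable N"
      by (rule Gfun_meas) (auto intro!: borel_measurable_continuous_onI apx_cont)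
    then show "(\<lambda>\<omega>. (\<pi> (V' \<omega> t) - \<pi> (V' \<omega> s)) * (\<Prod>i<m. apx j (Os i) (V' \<omega> (us i)))) \<in> borel_measurable N"
      unfolding Gfun_def by measurable
  next
    show "integrable N (\<lambda>\<omega>. \<bar>\<pi> (V' \<omega> t) - \<pi> (V' \<omega> s)\<bar>)"
      using lim_integrable[OF t0] lim_integrable[OF s0] by auto
    show "AE \<omega> in N. (\<lambda>j. (\<pi> (V' \<omega> t) - \<pi> (V' \<omega> s)) * (\<Prod>i<m. apx j (Os i) (V' \<omega> (us i)))) \<longlonglongrightarrow>
            (\<pi> (V' \<omega> t) - \<pi> (V' \<omega> s)) * (\<Prod>i<m. indicator (Os i) (V' \<omega> (us i)))"
      by (rule AE_I2, rule tendsto_mult[OF tendsto_const tendsto_prod]) (use uO apx_lim in auto)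
    fix j
    show "AE \<omega> in N. norm ((\<pi> (V' \<omega> t) - \<pi> (V' \<omega> s)) * (\<Prod>i<m. apx j (Os i) (V' \<omega> (us i)))) \<le> \<bar>\<pi> (V' \<omega> t) - \<pi> (V' \<omega> s)\<bar>"
    proof (rule AE_I2)
      fix \<omega>
      have "0 \<le> (\<Prod>i<m. apx j (Os i) (V' \<omega> (us i))) \<and> (\<Prod>i<m. apx j (Os i) (V' \<omega> (us i))) \<le> 1"
        using Gfun01[of m "\<lambda>i. apx j (Os i)"] apx01 unfolding Gfun_def by blast
      then show "norm ((\<pi> (V' \<omega> t) - \<pi> (V' \<omega> s)) * (\<Prod>i<m. apx j (Os i) (V' \<omega> (us i)))) \<le> \<bar>\<pi> (V' \<omega> t) - \<pi> (V' \<omega> s)\<bar>"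
        by (simp add: abs_mult mult_left_le)
    qed
  qed
  then show ?thesis using zero by (simp add: LIMSEQ_const_iff)
qed


lemma mart_lim:
  assumes s0: "0 \<le> s" and st: "s \<le> t" and A: "A \<in> nat_filt N V' s"
  shows "(\<integral>\<omega>. indicator A \<omega> * (\<pi> (V' \<omega> t) - \<pi> (V' \<omega> s)) \<partial>N) = 0"
proof -
  interpret pN: prob_space N by (rule PN)
  have t0: "0 \<le> t" using s0 st by linarith
  have V'mu[measurable]: "(\<lambda>\<omega>. V' \<omega> u) \<in> borel_measurable N" for u by (rule V'm)
  define D where "D = (\<lambda>\<omega>. \<pi> (V' \<omega> t) - \<pi> (V' \<omega> s))"
  have Dm[measurable]: "D \<in> borel_measurable N" unfolding D_def by measurable
  have iD: "integrable N D" unfolding D_def using lim_integrable[OF t0] lim_integrable[OF s0] by auto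
  define \<Omega> where "\<Omega> = space N"
  define Gs where "Gs = {\<Omega> \<inter> (\<Inter>i<m. (\<lambda>\<omega>. V' \<omega> (us i)) -` Os i) | (m::nat) (us::nat\<Rightarrow>real) (Os::nat\<Rightarrow>'e set).
                          \<forall>i<m. 0 \<le> us i \<and> us i \<le> s \<and> open (Os i)}"
  have GsD: "\<exists>(m::nat) (us::nat\<Rightarrow>real) (Os::nat\<Rightarrow>'e set). B = \<Omega> \<inter> (\<Inter>i<m. (\<lambda>\<omega>. V' \<omega> (us i)) -` Os i) \<and>
     (\<forall>i<m. 0 \<le> us i \<and> us i \<le> s \<and> open (Os i))" if "B \<in> Gs" for B
    using that unfolding Gs_def by (simp only: mem_Collect_eq)
  have Gs_sets: "Gs \<subseteq> sets N"
  proof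
    fix B assume "B \<in> Gs"
    obtain m :: nat and us :: "nat \<Rightarrow> real" and Os :: "nat \<Rightarrow> 'e set" where B: "B = \<Omega> \<inter> (\<Inter>i<m. (\<lambda>\<omega>. V' \<omega> (us i)) -` Os i)"
      and uO: "\<forall>i<m. 0 \<le> us i \<and> us i \<le> s \<and> open (Os i)" using GsD[OF \<open>B \<in> Gs\<close>] by blast
    have "B = {\<omega>\<in>space N. \<forall>i\<in>{..<m}. V' \<omega> (us i) \<in> Os i}" unfolding B \<Omega>_def by auto
    also have "\<dots> \<in> sets N"
    proof (rule sets.sets_Collect_finite_All)
      fix i assume "i \<in> {..<m}"
      then have "Os i \<in> sets borel" using uO by auto
      then have "(\<lambda>\<omega>. V' \<omega> (us i)) -` Os i \<inter> space N \<in> sets N" by (rule measurable_sets[OF V'm])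
      moreover have "{\<omega>\<in>space N. V' \<omega> (us i) \<in> Os i} = (\<lambda>\<omega>. V' \<omega> (us i)) -` Os i \<inter> space N" by auto
      ultimately show "{\<omega>\<in>space N. V' \<omega> (us i) \<in> Os i} \<in> sets N" by simp
    qed simp
    finally show "B \<in> sets N" .
  qed
  have GsP: "Gs \<subseteq> Pow \<Omega>" using Gs_sets sets.sets_into_space unfolding \<Omega>_def by auto
  have sGs: "sigma_sets \<Omega> Gs \<subseteq> sets N" unfolding \<Omega>_def by (rule sets.sigma_sets_subset[OF Gs_sets[unfolded \<Omega>_def]])
  have OmG: "\<Omega> \<in> Gs" unfolding Gs_def by (rule CollectI, rule exI[of _ 0]) auto
  have Int_Gs: "Int_stable Gs"
    unfolding Int_stable_def
  proof (intro ballI)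
    fix a b assume ab: "a \<in> Gs" "b \<in> Gs"
    obtain m1 :: nat and us1 :: "nat \<Rightarrow> real" and Os1 :: "nat \<Rightarrow> 'e set" where a: "a = \<Omega> \<inter> (\<Inter>i<m1. (\<lambda>\<omega>. V' \<omega> (us1 i)) -` Os1 i)"
      and uO1: "\<forall>i<m1. 0 \<le> us1 i \<and> us1 i \<le> s \<and> open (Os1 i)" using GsD[OF ab(1)] by blast
    obtain m2 :: nat and us2 :: "nat \<Rightarrow> real" and Os2 :: "nat \<Rightarrow> 'e set" where b: "b = \<Omega> \<inter> (\<Inter>i<m2. (\<lambda>\<omega>. V' \<omega> (us2 i)) -` Os2 i)"
      and uO2: "\<forall>i<m2. 0 \<le> us2 i \<and> us2 i \<le> s \<and> open (Os2 i)" using GsD[OF ab(2)] by blast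
    define us where "us = (\<lambda>i. if i < m1 then us1 i else us2 (i - m1))"
    define Os where "Os = (\<lambda>i. if i < m1 then Os1 i else Os2 (i - m1))"
    have uO: "\<forall>i<m1+m2. 0 \<le> us i \<and> us i \<le> s \<and> open (Os i)"
      using uO1 uO2 unfolding us_def Os_def by auto
    have "a \<inter> b = \<Omega> \<inter> (\<Inter>i<m1+m2. (\<lambda>\<omega>. V' \<omega> (us i)) -` Os i)"
    proof (intro equalityI subsetI)
      fix \<omega> assume w: "\<omega> \<in> a \<inter> b"
      show "\<omega> \<in> \<Omega> \<inter> (\<Inter>i<m1+m2. (\<lambda>\<omega>. V' \<omega> (us i)) -` Os i)"
      proof (intro IntI INT_I)
        show "\<omega> \<in> \<Omega>" using w a by auto
        fix i assume "i \<in> {..<m1+m2}"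
        then show "\<omega> \<in> (\<lambda>\<omega>. V' \<omega> (us i)) -` Os i"
          using w a b by (cases "i < m1") (auto simp: us_def Os_def)
      qed
    next
      fix \<omega> assume w: "\<omega> \<in> \<Omega> \<inter> (\<Inter>i<m1+m2. (\<lambda>\<omega>. V' \<omega> (us i)) -` Os i)"
      have "\<omega> \<in> a"
      proof -
        have "V' \<omega> (us1 i) \<in> Os1 i" if "i < m1" for i
        proof -
          have "i \<in> {..<m1+m2}" using that by auto
          then have "\<omega> \<in> (\<lambda>\<omega>. V' \<omega> (us i)) -` Os i" using w by blast
          then show ?thesis using that by (simp add: us_def Os_def)
        qed
        then show ?thesis using w a by auto
      qed
      moreover have "\<omega> \<in> b"
      proof -
        have "V' \<omega> (us2 i) \<in> Os2 i" if "i < m2" for i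
        proof -
          have "i + m1 \<in> {..<m1+m2}" using that by auto
          then have "\<omega> \<in> (\<lambda>\<omega>. V' \<omega> (us (i + m1))) -` Os (i + m1)" using w by blast
          then show ?thesis by (simp add: us_def Os_def)
        qed
        then show ?thesis using w b by auto
      qed
      ultimately show "\<omega> \<in> a \<inter> b" by auto
    qed
    then show "a \<inter> b \<in> Gs" unfolding Gs_def using uO by blast
  qed
  have gens_sub: "nat_filt N V' s \<subseteq> sigma_sets \<Omega> Gs"
    unfolding nat_filt_def \<Omega>_def[symmetric]
  proof (rule sigma_sets_mono, safe)
    fix u :: real and B :: "'e set" assume u: "u \<in> {0..s}" and B: "B \<in> sets borel"
    have "(\<lambda>\<omega>. V' \<omega> u) \<in> measurable (sigma \<Omega> Gs) (sigma UNIV {S. open S})"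
    proof (rule measurable_measure_of)
      show "(\<lambda>\<omega>. V' \<omega> u) \<in> space (sigma \<Omega> Gs) \<rightarrow> UNIV" by simp
      fix S :: "'e set" assume "S \<in> {S. open S}"
      then have "\<Omega> \<inter> (\<Inter>i<Suc 0. (\<lambda>\<omega>. V' \<omega> ((\<lambda>_. u) i)) -` (\<lambda>_. S) i) \<in> Gs"
        using u unfolding Gs_def by (intro CollectI exI[of _ "Suc 0"] exI[of _ "\<lambda>_. u"] exI[of _ "\<lambda>_. S"]) auto
      moreover have "(\<Inter>i<Suc 0. (\<lambda>\<omega>. V' \<omega> ((\<lambda>_. u) i)) -` (\<lambda>_. S) i) = (\<lambda>\<omega>. V' \<omega> u) -` S" by auto
      ultimately have "(\<lambda>\<omega>. V' \<omega> u) -` S \<inter> \<Omega> \<in> Gs" by (simp add: Int_commute)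
      then show "(\<lambda>\<omega>. V' \<omega> u) -` S \<inter> space (sigma \<Omega> Gs) \<in> sets (sigma \<Omega> Gs)"
        using GsP by (auto simp: sets_measure_of space_measure_of_conv intro: sigma_sets.Basic)
    qed simp
    then have "(\<lambda>\<omega>. V' \<omega> u) \<in> measurable (sigma \<Omega> Gs) borel" by (simp add: borel_def)
    from measurable_sets[OF this B]
    show "(\<lambda>\<omega>. V' \<omega> u) -` B \<inter> \<Omega> \<in> sigma_sets \<Omega> Gs"
      using GsP by (simp add: sets_measure_of space_measure_of_conv)
  qed
  have basic: "(\<integral>\<omega>. indicator B \<omega> * D \<omega> \<partial>N) = 0" if "B \<in> Gs" for B
  proof -
    obtain m :: nat and us :: "nat \<Rightarrow> real" and Os :: "nat \<Rightarrow> 'e set" where B: "B = \<Omega> \<inter> (\<Inter>i<m. (\<lambda>\<omega>. V' \<omega> (us i)) -` Os i)"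
      and uO: "\<forall>i<m. 0 \<le> us i \<and> us i \<le> s \<and> open (Os i)" using GsD[OF \<open>B \<in> Gs\<close>] by blast
    have "(\<integral>\<omega>. indicator B \<omega> * D \<omega> \<partial>N) =
          (\<integral>\<omega>. (\<pi> (V' \<omega> t) - \<pi> (V' \<omega> s)) * (\<Prod>i<m. indicator (Os i) (V' \<omega> (us i))) \<partial>N)"
    proof (rule Bochner_Integration.integral_cong[OF refl])
      fix \<omega> assume w: "\<omega> \<in> space N"
      have "indicator B \<omega> = (\<Prod>i<m. indicator (Os i) (V' \<omega> (us i)) :: real)"
      proof (cases "\<forall>i<m. V' \<omega> (us i) \<in> Os i")
        case True
        then have "\<omega> \<in> B" using w unfolding B \<Omega>_def by auto
        then show ?thesis using True by (simp add: indicator_def)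
      next
        case False
        then obtain i where i: "i < m" "V' \<omega> (us i) \<notin> Os i" by auto
        then have "\<omega> \<notin> B" unfolding B by auto
        moreover have "(\<Prod>i<m. indicator (Os i) (V' \<omega> (us i)) :: real) = 0"
          using i by (intro prod_zero) (auto intro!: bexI[of _ i])
        ultimately show ?thesis by simp
      qed
      then show "indicator B \<omega> * D \<omega> = (\<pi> (V' \<omega> t) - \<pi> (V' \<omega> s)) * (\<Prod>i<m. indicator (Os i) (V' \<omega> (us i)))"
        by (simp add: D_def mult.commute)
    qed
    also have "\<dots> = 0" by (rule gen_ind[OF s0 st]) (use uO in auto)
    finally show ?thesis .
  qed
  have intD: "(\<integral>\<omega>. D \<omega> \<partial>N) = 0"
  proof -
    have "(\<integral>\<omega>. D \<omega> \<partial>N) = (\<integral>\<omega>. indicator \<Omega> \<omega> * D \<omega> \<partial>N)"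
      by (rule Bochner_Integration.integral_cong) (auto simp: \<Omega>_def)
    then show ?thesis using basic[OF OmG] by simp
  qed
  have Asig: "A \<in> sigma_sets \<Omega> Gs" using A gens_sub by auto
  have "(\<integral>\<omega>. indicator A \<omega> * D \<omega> \<partial>N) = 0"
  proof (rule sigma_sets_induct_disjoint[OF Int_Gs GsP Asig, where P="\<lambda>B. (\<integral>\<omega>. indicator B \<omega> * D \<omega> \<partial>N) = 0"])
    fix B assume "B \<in> Gs" then show "(\<integral>\<omega>. indicator B \<omega> * D \<omega> \<partial>N) = 0" by (rule basic)
  next
    show "(\<integral>\<omega>. indicator {} \<omega> * D \<omega> \<partial>N) = 0" by simp
  next
    fix B assume hyp: "B \<in> sigma_sets \<Omega> Gs" and IH: "(\<integral>\<omega>. indicator B \<omega> * D \<omega> \<partial>N) = 0"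
    have Bs: "B \<in> sets N" using hyp sGs by auto
    have "(\<integral>\<omega>. indicator (\<Omega> - B) \<omega> * D \<omega> \<partial>N) = (\<integral>\<omega>. D \<omega> - indicator B \<omega> * D \<omega> \<partial>N)"
      by (rule Bochner_Integration.integral_cong) (auto simp: \<Omega>_def indicator_def)
    also have "\<dots> = (\<integral>\<omega>. D \<omega> \<partial>N) - (\<integral>\<omega>. indicator B \<omega> * D \<omega> \<partial>N)"
      using iD Bs by (intro Bochner_Integration.integral_diff) (auto intro: integrable_real_mult_indicator simp: mult.commute)
    finally show "(\<integral>\<omega>. indicator (\<Omega> - B) \<omega> * D \<omega> \<partial>N) = 0" using intD IH by simp
  next
    fix B :: "nat \<Rightarrow> 'b set"
    assume disj: "disjoint_family B" and rng: "range B \<subseteq> sigma_sets \<Omega> Gs"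
      and IH: "\<And>i. (\<integral>\<omega>. indicator (B i) \<omega> * D \<omega> \<partial>N) = 0"
    have Bs: "\<And>i. B i \<in> sets N" using rng sGs by auto
    have "(\<integral>\<omega>. indicator (\<Union>i. B i) \<omega> * D \<omega> \<partial>N) = (LINT \<omega>:(\<Union>i. B i)|N. D \<omega>)"
      by (simp add: set_lebesgue_integral_def)
    also have "\<dots> = (\<Sum>i. (LINT \<omega>:(B i)|N. D \<omega>))"
    proof (rule lebesgue_integral_countable_add[OF Bs])
      show "\<And>i j. i \<noteq> j \<Longrightarrow> B i \<inter> B j = {}" using disj unfolding disjoint_family_on_def by auto
      have "(\<Union>i. B i) \<in> sets N" using Bs by auto
      then show "set_integrable N (\<Union>i. B i) D"
        unfolding set_integrable_def using iD by (rule integrable_mult_indicator)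
    qed
    also have "\<dots> = 0" using IH by (simp add: set_lebesgue_integral_def)
    finally show "(\<integral>\<omega>. indicator (\<Union>i. B i) \<omega> * D \<omega> \<partial>N) = 0" .
  qed
  then show ?thesis by (simp add: D_def)
qed
end

lemma sup_set_meas:
  fixes g :: "'a \<Rightarrow> real \<Rightarrow> real"
  assumes gm: "\<And>t. (\<lambda>\<omega>. g \<omega> t) \<in> borel_measurable M"
    and rc: "\<And>\<omega> t. \<omega> \<in> space M \<Longrightarrow> t \<ge> 0 \<Longrightarrow> continuous (at_right t) (g \<omega>)"
    and T: "T \<ge> 0"
  shows "{\<omega>\<in>space M. \<exists>t\<in>{0..T}. g \<omega> t > e} \<in> sets M"
proof -
  define Q where "Q = insert T (\<rat> \<inter> {0..T})"
  have cQ: "countable Q" unfolding Q_def by (auto intro: countable_subset[OF _ countable_rat])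
  have eq: "{\<omega>\<in>space M. \<exists>t\<in>{0..T}. g \<omega> t > e} = (\<Union>q\<in>Q. {\<omega>\<in>space M. g \<omega> q > e})"
  proof (intro equalityI subsetI)
    fix \<omega> assume "\<omega> \<in> {\<omega>\<in>space M. \<exists>t\<in>{0..T}. g \<omega> t > e}"
    then obtain t where w: "\<omega> \<in> space M" and t: "0 \<le> t" "t \<le> T" and gt: "g \<omega> t > e" by auto
    show "\<omega> \<in> (\<Union>q\<in>Q. {\<omega>\<in>space M. g \<omega> q > e})"
    proof (cases "t = T")
      case True then show ?thesis using w gt by (auto simp: Q_def)
    next
      case False
      then have tT: "t < T" using t by auto
      have "(g \<omega> \<longlongrightarrow> g \<omega> t) (at_right t)"
        using rc[OF w t(1)] by (simp add: continuous_within)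
      then have "\<forall>\<^sub>F s in at_right t. e < g \<omega> s" using gt by (rule order_tendstoD(1))
      then obtain b where b: "b > t" and bP: "\<And>s. s > t \<Longrightarrow> s < b \<Longrightarrow> e < g \<omega> s"
        by (auto simp: eventually_at_right[of t "t+1"])
      obtain q where q: "q \<in> \<rat>" "t < q" "q < min b T" using Rats_dense_in_real[of t "min b T"] b tT by auto
      then have "q \<in> Q" using t by (auto simp: Q_def)
      moreover have "e < g \<omega> q" using bP q by auto
      ultimately show ?thesis using w by auto
    qed
  next
    fix \<omega> assume "\<omega> \<in> (\<Union>q\<in>Q. {\<omega>\<in>space M. g \<omega> q > e})"
    then obtain q where "q \<in> Q" "\<omega> \<in> space M" "g \<omega> q > e" by auto
    moreover have "q \<in> {0..T}" using \<open>q \<in> Q\<close> T by (auto simp: Q_def)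
    ultimately show "\<omega> \<in> {\<omega>\<in>space M. \<exists>t\<in>{0..T}. g \<omega> t > e}" by auto
  qed
  have "(\<Union>q\<in>Q. {\<omega>\<in>space M. g \<omega> q > e}) \<in> sets M"
    using cQ by (intro sets.countable_UN') (auto intro: measurable_sets_Collect[OF gm] simp: image_subset_iff)
  then show ?thesis using eq by simp
qed

lemma inprob_cpz:
  fixes Z :: "nat \<Rightarrow> 'a \<Rightarrow> real \<Rightarrow> 'e::real_normed_vector"
  assumes P: "\<And>n. prob_space (M n)"
    and cpz: "conv_prob_zero M Z"
    and Zm: "\<And>n t. (\<lambda>\<omega>. Z n \<omega> t) \<in> borel_measurable (M n)"
    and rc: "\<And>n \<omega> t. \<omega> \<in> space (M n) \<Longrightarrow> t \<ge> 0 \<Longrightarrow> continuous (at_right t) (Z n \<omega>)"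
    and t: "t \<ge> 0"
  shows "inprob M (\<lambda>n \<omega>. norm (Z n \<omega> t))"
  unfolding inprob_def
proof (intro allI impI)
  fix e :: real assume e: "e > 0"
  have lim: "(\<lambda>n. measure (M n) {\<omega>\<in>space (M n). \<exists>s\<in>{0..t}. norm (Z n \<omega> s) > e}) \<longlonglongrightarrow> 0"
    using cpz e unfolding conv_prob_zero_def by auto
  show "(\<lambda>n. measure (M n) {\<omega>\<in>space (M n). norm (Z n \<omega> t) > e}) \<longlonglongrightarrow> 0"
  proof (rule tendsto_sandwich[OF _ _ tendsto_const lim])
    show "\<forall>\<^sub>F n in sequentially. 0 \<le> measure (M n) {\<omega>\<in>space (M n). norm (Z n \<omega> t) > e}" by auto
    show "\<forall>\<^sub>F n in sequentially. measure (M n) {\<omega>\<in>space (M n). norm (Z n \<omega> t) > e}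
             \<le> measure (M n) {\<omega>\<in>space (M n). \<exists>s\<in>{0..t}. norm (Z n \<omega> s) > e}"
    proof (intro always_eventually allI)
      fix n
      interpret p: prob_space "M n" by (rule P)
      have "{\<omega>\<in>space (M n). \<exists>s\<in>{0..t}. norm (Z n \<omega> s) > e} \<in> sets (M n)"
      proof (rule sup_set_meas[OF _ _ t])
        show "(\<lambda>\<omega>. norm (Z n \<omega> s)) \<in> borel_measurable (M n)" for s using Zm[of n s] by measurable
        show "continuous (at_right s) (\<lambda>s. norm (Z n \<omega> s))" if "\<omega> \<in> space (M n)" "s \<ge> 0" for \<omega> s
          using rc[OF that] by (intro continuous_norm)
      qed
      then show "measure (M n) {\<omega>\<in>space (M n). norm (Z n \<omega> t) > e}
             \<le> measure (M n) {\<omega>\<in>space (M n). \<exists>s\<in>{0..t}. norm (Z n \<omega> s) > e}"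
        using t by (intro p.finite_measure_mono) auto
    qed
  qed
qed

lemma inprob_cd0:
  fixes X :: "nat \<Rightarrow> 'a \<Rightarrow> real \<Rightarrow> 'e::real_normed_vector" and B :: "'c \<Rightarrow> real \<Rightarrow> 'e"
  assumes P: "\<And>n. prob_space (M n)" and PL: "prob_space L"
    and cd: "conv_dist M X L B" and B0: "\<And>\<omega>. \<omega> \<in> space L \<Longrightarrow> B \<omega> 0 = 0"
    and Xm: "\<And>n. (\<lambda>\<omega>. X n \<omega> 0) \<in> borel_measurable (M n)"
  shows "inprob M (\<lambda>n \<omega>. norm (X n \<omega> 0))"
  unfolding inprob_def
proof (intro allI impI)
  fix e :: real assume e: "e > 0"
  define F where "F = (\<lambda>v::real \<Rightarrow> 'e. min 1 (norm (v 0)))"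
  have bF: "bc_functional F"
  proof (rule bcf_intro[where B=1])
    show "F x = F y" if "\<forall>t\<ge>0. x t = y t" for x y using that by (simp add: F_def)
    show "\<bar>F x\<bar> \<le> 1" for x by (simp add: F_def)
    show "(\<lambda>n. F (xs n)) \<longlonglongrightarrow> F x" if "\<And>u. u \<ge> 0 \<Longrightarrow> (\<lambda>n. xs n u) \<longlonglongrightarrow> x u" for xs x
      unfolding F_def using that[of 0] by (intro tendsto_intros) auto
  qed
  have "(\<lambda>n. \<integral>\<omega>. F (X n \<omega>) \<partial>M n) \<longlonglongrightarrow> (\<integral>\<omega>. F (B \<omega>) \<partial>L)"
    using cd bF unfolding conv_dist_def by auto
  moreover have "(\<integral>\<omega>. F (B \<omega>) \<partial>L) = 0"
    by (subst Bochner_Integration.integral_cong[where g="\<lambda>_. 0"]) (auto simp: F_def B0)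
  ultimately have lim: "(\<lambda>n. \<integral>\<omega>. F (X n \<omega>) \<partial>M n) \<longlonglongrightarrow> 0" by simp
  define c where "c = min e 1"
  have c: "c > 0" using e by (auto simp: c_def)
  have lim2: "(\<lambda>n. (\<integral>\<omega>. F (X n \<omega>) \<partial>M n) / c) \<longlonglongrightarrow> 0"
    using tendsto_divide[OF lim tendsto_const[of c]] c by simp
  show "(\<lambda>n. measure (M n) {\<omega>\<in>space (M n). norm (X n \<omega> 0) > e}) \<longlonglongrightarrow> 0"
  proof (rule tendsto_sandwich[OF _ _ tendsto_const lim2])
    show "\<forall>\<^sub>F n in sequentially. 0 \<le> measure (M n) {\<omega>\<in>space (M n). norm (X n \<omega> 0) > e}" by auto
    show "\<forall>\<^sub>F n in sequentially. measure (M n) {\<omega>\<in>space (M n). norm (X n \<omega> 0) > e} \<le> (\<integral>\<omega>. F (X n \<omega>) \<partial>M n) / c"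
    proof (intro always_eventually allI)
      fix n
      interpret p: prob_space "M n" by (rule P)
      have Fm: "(\<lambda>\<omega>. F (X n \<omega>)) \<in> borel_measurable (M n)" unfolding F_def using Xm[of n] by measurable
      have iF: "integrable (M n) (\<lambda>\<omega>. F (X n \<omega>))"
        by (rule p.integrable_const_bound[where B=1]) (use Fm in \<open>auto simp: F_def\<close>)
      have Sm: "{\<omega>\<in>space (M n). F (X n \<omega>) \<ge> c} \<in> sets (M n)" using Fm by measurable
      have "measure (M n) {\<omega>\<in>space (M n). norm (X n \<omega> 0) > e} \<le> measure (M n) {\<omega>\<in>space (M n). F (X n \<omega>) \<ge> c}"
        by (rule p.finite_measure_mono[OF _ Sm]) (auto simp: F_def c_def)
      also have "\<dots> \<le> (\<integral>\<omega>. F (X n \<omega>) \<partial>M n) / c"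
        by (rule integral_Markov_inequality_measure[OF iF, where A="space (M n)"]) (use c in \<open>auto simp: F_def\<close>)
      finally show "measure (M n) {\<omega>\<in>space (M n). norm (X n \<omega> 0) > e} \<le> (\<integral>\<omega>. F (X n \<omega>) \<partial>M n) / c" .
    qed
  qed
qed

lemma integrable_from_basis:
  fixes f :: "'a \<Rightarrow> 'e::euclidean_space"
  assumes "\<And>b. b \<in> Basis \<Longrightarrow> integrable M (\<lambda>x. f x \<bullet> b)"
  shows "integrable M f"
proof -
  have "integrable M (\<lambda>x. \<Sum>b\<in>Basis. (f x \<bullet> b) *\<^sub>R b)"
    using assms by (intro Bochner_Integration.integrable_sum integrable_scaleR_left) auto
  then show ?thesis by (simp add: euclidean_representation)
qed

lemma set_integral_inner:
  fixes f :: "'a \<Rightarrow> 'e::euclidean_space"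
  assumes "integrable M f" "A \<in> sets M"
  shows "(set_lebesgue_integral M A f) \<bullet> b = (\<integral>x. indicator A x * (f x \<bullet> b) \<partial>M)"
proof -
  have "(\<integral>x. (indicator A x *\<^sub>R f x) \<bullet> b \<partial>M) = (\<integral>x. indicator A x *\<^sub>R f x \<partial>M) \<bullet> b"
    by (rule integral_bounded_linear[OF bounded_linear_inner_left integrable_mult_indicator[OF assms(2,1)]])
  then show ?thesis by (simp add: set_lebesgue_integral_def)
qed

lemma bl_pi: "bounded_linear (\<lambda>v::'x::real_normed_vector \<times> 'e::real_inner \<times> 'y::real_normed_vector. fst (snd v) \<bullet> b)"
  by (intro bounded_linear_compose[OF bounded_linear_inner_left] bounded_linear_compose[OF bounded_linear_fst bounded_linear_snd])

lemma pib_pi: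
  fixes v :: "'x::real_normed_vector \<times> 'e::euclidean_space \<times> 'y::real_normed_vector"
  assumes "b \<in> Basis"
  shows "\<bar>fst (snd v) \<bullet> b\<bar> \<le> norm v"
proof -
  obtain a c d where v: "v = (a, c, d)" by (cases v) auto
  have "\<bar>c \<bullet> b\<bar> \<le> norm c" using Basis_le_norm[OF assms] .
  also have "\<dots> \<le> norm (c, d)" by (rule norm_fst_le)
  also have "\<dots> \<le> norm (a, c, d)" by (rule norm_snd_le)
  finally show ?thesis using v by simp
qed

lemma norm_triple_le:
  fixes a a' :: "'x::real_normed_vector" and c c' :: "'e::real_normed_vector" and d d' :: "'y::real_normed_vector"
  shows "norm ((a, c, d) - (a', c', d')) \<le> norm (a - a') + (norm (c - c') + norm (d - d'))"
proof -
  have "norm ((a, c, d) - (a', c', d')) = norm (a - a', c - c', d - d')" by simp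
  also have "\<dots> \<le> norm (a - a') + norm (c - c', d - d')" by (rule norm_Pair_le)
  also have "\<dots> \<le> norm (a - a') + (norm (c - c') + norm (d - d'))" using norm_Pair_le by (intro add_left_mono)
  finally show ?thesis .
qed

lemma norm_triple_le2:
  fixes a :: "'x::real_normed_vector" and c :: "'e::real_normed_vector" and d :: "'y::real_normed_vector"
  shows "norm (a, c, d) \<le> norm a + (norm c + norm d)"
  by (metis add_left_mono norm_Pair_le order.trans)

lemma rc_of_cpath:
  assumes "cpath x" "t \<ge> 0"
  shows "continuous (at_right t) x"
proof -
  have "continuous (at t within {0..}) x"
    using assms unfolding cpath_def by (auto simp: continuous_on_eq_continuous_within)
  then show ?thesis by (rule continuous_within_subset) (use assms(2) in auto)
qed


theorem proposition6p5:
  fixes R :: "real^'k^'d"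
    and f :: "'k \<Rightarrow> 'd set"
    and M :: "nat \<Rightarrow> 'a measure"
    and W X :: "nat \<Rightarrow> 'a \<Rightarrow> real \<Rightarrow> real^'d"
    and Y :: "nat \<Rightarrow> 'a \<Rightarrow> real \<Rightarrow> real^'k"
    and Wc Xc :: "nat \<Rightarrow> 'a \<Rightarrow> real \<Rightarrow> real^'d"
    and Yc :: "nat \<Rightarrow> 'a \<Rightarrow> real \<Rightarrow> real^'k"
    and N :: "'b measure"
    and V' :: "'b \<Rightarrow> real \<Rightarrow> (real^'d) \<times> (real^'d) \<times> (real^'k)"
    and r :: "nat \<Rightarrow> nat"
  assumes dk: "CARD('d) \<le> CARD('k)"
    and prob: "\<And>n. prob_space (M n)"
    and meas: "\<And>n t. (\<lambda>\<omega>. W n \<omega> t) \<in> borel_measurable (M n)"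
              "\<And>n t. (\<lambda>\<omega>. X n \<omega> t) \<in> borel_measurable (M n)"
              "\<And>n t. (\<lambda>\<omega>. Y n \<omega> t) \<in> borel_measurable (M n)"
    and cont: "\<And>n \<omega>. \<omega> \<in> space (M n) \<Longrightarrow> cpath (W n \<omega>) \<and> cpath (X n \<omega>) \<and> cpath (Y n \<omega>)"
    and i: "\<And>n \<omega> t. \<omega> \<in> space (M n) \<Longrightarrow> t \<ge> 0 \<Longrightarrow> W n \<omega> t = X n \<omega> t + R *v Y n \<omega> t"
    and ii: "\<And>n. AE \<omega> in M n. \<forall>t\<ge>0. \<forall>l. 0 \<le> W n \<omega> t $ l"
    and iii: "\<exists>(L :: 'c measure) \<Sigma> B. transpose \<Sigma> = \<Sigma> \<and> (\<forall>u. 0 \<le> u \<bullet> (\<Sigma> *v u)) \<and>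
                 brownian_motion L \<Sigma> B \<and> conv_dist M X L B"
    and iv: "\<exists>\<delta>::nat \<Rightarrow> real. \<delta> \<longlonglongrightarrow> 0 \<and>
               (\<forall>n. AE \<omega> in M n. \<forall>j.
                  Y n \<omega> 0 $ j = 0 \<and> mono_on {0..} (\<lambda>t. Y n \<omega> t $ j) \<and>
                  (\<integral>\<^sup>+s. indicator {s. \<exists>l\<in>f j. W n \<omega> s $ l > \<delta> n} s
                     \<partial>interval_measure (\<lambda>t. Y n \<omega> (max 0 t) $ j)) = 0)"
    and measc: "\<And>n t. (\<lambda>\<omega>. Wc n \<omega> t) \<in> borel_measurable (M n)"
               "\<And>n t. (\<lambda>\<omega>. Xc n \<omega> t) \<in> borel_measurable (M n)"
               "\<And>n t. (\<lambda>\<omega>. Yc n \<omega> t) \<in> borel_measurable (M n)"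
    and cadl: "\<And>n \<omega>. \<omega> \<in> space (M n) \<Longrightarrow> cadlag (Wc n \<omega>) \<and> cadlag (Xc n \<omega>) \<and> cadlag (Yc n \<omega>)"
    and close: "conv_prob_zero M (\<lambda>n \<omega> t. X n \<omega> t - Xc n \<omega> t)"
               "conv_prob_zero M (\<lambda>n \<omega> t. Y n \<omega> t - Yc n \<omega> t)"
               "conv_prob_zero M (\<lambda>n \<omega> t. W n \<omega> t - Wc n \<omega> t)"
    and ui: "\<And>t. t \<ge> 0 \<Longrightarrow> unif_integrable M (\<lambda>n \<omega>. Xc n \<omega> t - Xc n \<omega> 0)"
    and mart: "\<And>n. martingale (M n) (nat_filt (M n) (\<lambda>\<omega> s. (Wc n \<omega> s, Xc n \<omega> s, Yc n \<omega> s)))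
                      (\<lambda>\<omega> t. Xc n \<omega> t - Xc n \<omega> 0)"
    and limN: "prob_space N"
    and limmeas: "\<And>t. (\<lambda>\<omega>. V' \<omega> t) \<in> borel_measurable N"
    and limcont: "\<And>\<omega>. \<omega> \<in> space N \<Longrightarrow> cpath (V' \<omega>)"
    and sub: "strict_mono r"
    and lim: "conv_dist (\<lambda>n. M (r n)) (\<lambda>n \<omega> t. (W (r n) \<omega> t, X (r n) \<omega> t, Y (r n) \<omega> t)) N V'"
  shows "martingale N (nat_filt N V') (\<lambda>\<omega> t. fst (snd (V' \<omega> t)))"
proof -
  have P: "\<And>n. prob_space (M n)" by (rule prob)
  note [measurable] = meas measc limmeas
  obtain L :: "'c measure" and \<Sigma> B where bm: "brownian_motion L \<Sigma> B" and cdX: "conv_dist M X L B"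
    using iii by blast
  have PL: "prob_space L" and B0: "\<And>\<omega>. \<omega> \<in> space L \<Longrightarrow> B \<omega> 0 = 0"
    using bm unfolding brownian_motion_def by auto
  have rcX: "continuous (at_right t) (\<lambda>t. X n \<omega> t - Xc n \<omega> t)"
    and rcY: "continuous (at_right t) (\<lambda>t. Y n \<omega> t - Yc n \<omega> t)"
    and rcW: "continuous (at_right t) (\<lambda>t. W n \<omega> t - Wc n \<omega> t)"
    if "\<omega> \<in> space (M n)" "t \<ge> 0" for n \<omega> t
  proof -
    have c: "cpath (W n \<omega>)" "cpath (X n \<omega>)" "cpath (Y n \<omega>)" using cont[OF that(1)] by auto
    have d: "cadlag (Wc n \<omega>)" "cadlag (Xc n \<omega>)" "cadlag (Yc n \<omega>)" using cadl[OF that(1)] by auto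
    have e: "continuous (at_right t) (Wc n \<omega>)" "continuous (at_right t) (Xc n \<omega>)" "continuous (at_right t) (Yc n \<omega>)"
      using d that(2) unfolding cadlag_def by auto
    show "continuous (at_right t) (\<lambda>t. X n \<omega> t - Xc n \<omega> t)"
      using rc_of_cpath[OF c(2) that(2)] e(2) by (intro continuous_diff)
    show "continuous (at_right t) (\<lambda>t. Y n \<omega> t - Yc n \<omega> t)"
      using rc_of_cpath[OF c(3) that(2)] e(3) by (intro continuous_diff)
    show "continuous (at_right t) (\<lambda>t. W n \<omega> t - Wc n \<omega> t)"
      using rc_of_cpath[OF c(1) that(2)] e(1) by (intro continuous_diff)
  qed
  have ipX: "inprob M (\<lambda>n \<omega>. norm (X n \<omega> t - Xc n \<omega> t))" if "t \<ge> 0" for t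
    by (rule inprob_cpz[OF P close(1) _ _ that, simplified]) (use rcX in auto)
  have ipY: "inprob M (\<lambda>n \<omega>. norm (Y n \<omega> t - Yc n \<omega> t))" if "t \<ge> 0" for t
    by (rule inprob_cpz[OF P close(2) _ _ that, simplified]) (use rcY in auto)
  have ipW: "inprob M (\<lambda>n \<omega>. norm (W n \<omega> t - Wc n \<omega> t))" if "t \<ge> 0" for t
    by (rule inprob_cpz[OF P close(3) _ _ that, simplified]) (use rcW in auto)
  have ipX0: "inprob M (\<lambda>n \<omega>. norm (X n \<omega> 0))"
    by (rule inprob_cd0[OF P PL cdX B0]) auto
  define V where "V = (\<lambda>n \<omega> t. (W (r n) \<omega> t, X (r n) \<omega> t, Y (r n) \<omega> t))"
  define Vc where "Vc = (\<lambda>n \<omega> t. (Wc (r n) \<omega> t, Xc (r n) \<omega> t, Yc (r n) \<omega> t))"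
  define X' where "X' = (\<lambda>\<omega> t. fst (snd (V' \<omega> t)))"
  have wl: "wlim (\<lambda>n. M (r n)) V Vc N V' (\<lambda>v. fst (snd v) \<bullet> b) (\<lambda>n \<omega> t. (Xc (r n) \<omega> t - Xc (r n) \<omega> 0) \<bullet> b)"
    if b: "b \<in> Basis" for b
  proof (rule wlim.intro)
    show "prob_space (M (r n))" for n by (rule prob)
    show "prob_space N" by (rule limN)
    show "(\<lambda>\<omega>. V n \<omega> t) \<in> borel_measurable (M (r n))" for n t unfolding V_def by measurable
    show "(\<lambda>\<omega>. Vc n \<omega> t) \<in> borel_measurable (M (r n))" for n t unfolding Vc_def by measurable
    show "(\<lambda>\<omega>. V' \<omega> t) \<in> borel_measurable N" for t by (rule limmeas)
    show "conv_dist (\<lambda>n. M (r n)) V N V'" unfolding V_def by (rule lim)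
    show "bounded_linear (\<lambda>v::(real^'d) \<times> (real^'d) \<times> (real^'k). fst (snd v) \<bullet> b)" by (rule bl_pi)
    show "\<bar>fst (snd x) \<bullet> b\<bar> \<le> norm x" for x :: "(real^'d) \<times> (real^'d) \<times> (real^'k)" by (rule pib_pi[OF b])
    show "(\<lambda>\<omega>. (Xc (r n) \<omega> t - Xc (r n) \<omega> 0) \<bullet> b) \<in> borel_measurable (M (r n))" for n t by measurable
    show "inprob (\<lambda>n. M (r n)) (\<lambda>n \<omega>. \<bar>fst (snd (V n \<omega> t)) \<bullet> b - (Xc (r n) \<omega> t - Xc (r n) \<omega> 0) \<bullet> b\<bar>)"
      if t: "t \<ge> 0" for t
    proof -
      have "inprob M (\<lambda>n \<omega>. \<bar>X n \<omega> t \<bullet> b - (Xc n \<omega> t - Xc n \<omega> 0) \<bullet> b\<bar>)"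
      proof (rule inprob_add[OF P _ _ _ _ ipX[OF t] inprob_add[OF P _ _ _ _ ipX[of 0] ipX0]])
        fix n \<omega>
        have "X n \<omega> t \<bullet> b - (Xc n \<omega> t - Xc n \<omega> 0) \<bullet> b = (X n \<omega> t - Xc n \<omega> t + (Xc n \<omega> 0 - X n \<omega> 0) + X n \<omega> 0) \<bullet> b"
          by (simp add: inner_diff_left inner_add_left)
        also have "\<bar>\<dots>\<bar> \<le> norm (X n \<omega> t - Xc n \<omega> t + (Xc n \<omega> 0 - X n \<omega> 0) + X n \<omega> 0)" by (rule Basis_le_norm[OF b])
        also have "\<dots> \<le> norm (X n \<omega> t - Xc n \<omega> t) + (norm (X n \<omega> 0 - Xc n \<omega> 0) + norm (X n \<omega> 0))"
          by (metis (no_types, lifting) add.assoc norm_minus_commute norm_triangle_ineq order.trans add_left_mono)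
        finally show "\<bar>X n \<omega> t \<bullet> b - (Xc n \<omega> t - Xc n \<omega> 0) \<bullet> b\<bar> \<le> norm (X n \<omega> t - Xc n \<omega> t) + (norm (X n \<omega> 0 - Xc n \<omega> 0) + norm (X n \<omega> 0))" .
      qed (auto simp: order_refl)
      then show ?thesis using inprob_subseq[OF _ sub] by (auto simp: V_def)
    qed
    show "inprob (\<lambda>n. M (r n)) (\<lambda>n \<omega>. norm (V n \<omega> t - Vc n \<omega> t))" if t: "t \<ge> 0" for t
    proof -
      have "inprob M (\<lambda>n \<omega>. norm ((W n \<omega> t, X n \<omega> t, Y n \<omega> t) - (Wc n \<omega> t, Xc n \<omega> t, Yc n \<omega> t)))"
        by (rule inprob_add[OF P _ _ _ _ ipW[OF t] inprob_add[OF P _ _ _ _ ipX[OF t] ipY[OF t]]])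
           (auto intro: norm_triple_le norm_triple_le2)
      then show ?thesis using inprob_subseq[OF _ sub] by (auto simp: V_def Vc_def)
    qed
    show "((\<lambda>K. \<Squnion>n. \<integral>\<^sup>+\<omega>. ennreal \<bar>(Xc (r n) \<omega> t - Xc (r n) \<omega> 0) \<bullet> b\<bar> *
            indicator {\<omega>. \<bar>(Xc (r n) \<omega> t - Xc (r n) \<omega> 0) \<bullet> b\<bar> > K} \<omega> \<partial>M (r n)) \<longlongrightarrow> 0) at_top"
      if t: "t \<ge> 0" for t
    proof (rule tendsto_sandwich[OF _ _ tendsto_const ui[OF t, unfolded unif_integrable_def]])
      show "\<forall>\<^sub>F K in at_top. 0 \<le> (\<Squnion>n. \<integral>\<^sup>+\<omega>. ennreal \<bar>(Xc (r n) \<omega> t - Xc (r n) \<omega> 0) \<bullet> b\<bar> *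
            indicator {\<omega>. \<bar>(Xc (r n) \<omega> t - Xc (r n) \<omega> 0) \<bullet> b\<bar> > K} \<omega> \<partial>M (r n))" by simp
      show "\<forall>\<^sub>F K in at_top. (\<Squnion>n. \<integral>\<^sup>+\<omega>. ennreal \<bar>(Xc (r n) \<omega> t - Xc (r n) \<omega> 0) \<bullet> b\<bar> *
            indicator {\<omega>. \<bar>(Xc (r n) \<omega> t - Xc (r n) \<omega> 0) \<bullet> b\<bar> > K} \<omega> \<partial>M (r n)) \<le>
          (\<Squnion>n. \<integral>\<^sup>+\<omega>. ennreal (norm (Xc n \<omega> t - Xc n \<omega> 0)) * indicator {\<omega>. norm (Xc n \<omega> t - Xc n \<omega> 0) > K} \<omega> \<partial>M n)"
      proof (intro always_eventually allI SUP_least)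
        fix K :: real and n
        have "(\<integral>\<^sup>+\<omega>. ennreal \<bar>(Xc (r n) \<omega> t - Xc (r n) \<omega> 0) \<bullet> b\<bar> *
            indicator {\<omega>. \<bar>(Xc (r n) \<omega> t - Xc (r n) \<omega> 0) \<bullet> b\<bar> > K} \<omega> \<partial>M (r n)) \<le>
            (\<integral>\<^sup>+\<omega>. ennreal (norm (Xc (r n) \<omega> t - Xc (r n) \<omega> 0)) * indicator {\<omega>. norm (Xc (r n) \<omega> t - Xc (r n) \<omega> 0) > K} \<omega> \<partial>M (r n))"
        proof (rule nn_integral_mono)
          fix \<omega>
          have le: "\<bar>(Xc (r n) \<omega> t - Xc (r n) \<omega> 0) \<bullet> b\<bar> \<le> norm (Xc (r n) \<omega> t - Xc (r n) \<omega> 0)"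
            by (rule Basis_le_norm[OF b])
          show "ennreal \<bar>(Xc (r n) \<omega> t - Xc (r n) \<omega> 0) \<bullet> b\<bar> * indicator {\<omega>. \<bar>(Xc (r n) \<omega> t - Xc (r n) \<omega> 0) \<bullet> b\<bar> > K} \<omega>
              \<le> ennreal (norm (Xc (r n) \<omega> t - Xc (r n) \<omega> 0)) * indicator {\<omega>. norm (Xc (r n) \<omega> t - Xc (r n) \<omega> 0) > K} \<omega>"
            using le by (auto simp: indicator_def intro: ennreal_leI)
        qed
        also have "\<dots> \<le> (\<Squnion>n. \<integral>\<^sup>+\<omega>. ennreal (norm (Xc n \<omega> t - Xc n \<omega> 0)) * indicator {\<omega>. norm (Xc n \<omega> t - Xc n \<omega> 0) > K} \<omega> \<partial>M n)"
          by (rule SUP_upper) simp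
        finally show "(\<integral>\<^sup>+\<omega>. ennreal \<bar>(Xc (r n) \<omega> t - Xc (r n) \<omega> 0) \<bullet> b\<bar> *
            indicator {\<omega>. \<bar>(Xc (r n) \<omega> t - Xc (r n) \<omega> 0) \<bullet> b\<bar> > K} \<omega> \<partial>M (r n)) \<le>
            (\<Squnion>n. \<integral>\<^sup>+\<omega>. ennreal (norm (Xc n \<omega> t - Xc n \<omega> 0)) * indicator {\<omega>. norm (Xc n \<omega> t - Xc n \<omega> 0) > K} \<omega> \<partial>M n)" .
      qed
    qed
    show "integrable (M (r n)) (\<lambda>\<omega>. (Xc (r n) \<omega> t - Xc (r n) \<omega> 0) \<bullet> b)" if t: "t \<ge> 0" for n t
    proof -
      have "integrable (M (r n)) (\<lambda>\<omega>. Xc (r n) \<omega> t - Xc (r n) \<omega> 0)"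
        using mart[of "r n"] t unfolding martingale_def by auto
      then show ?thesis by (rule integrable_bounded_linear[OF bounded_linear_inner_left])
    qed
    show "(\<integral>\<omega>. indicator A \<omega> * ((Xc (r n) \<omega> t - Xc (r n) \<omega> 0) \<bullet> b - (Xc (r n) \<omega> s - Xc (r n) \<omega> 0) \<bullet> b) \<partial>M (r n)) = 0"
      if st: "0 \<le> s" "s \<le> t" and A: "A \<in> nat_filt (M (r n)) (Vc n) s" for n s t A
    proof -
      let ?F = "nat_filt (M (r n)) (\<lambda>\<omega> s. (Wc (r n) \<omega> s, Xc (r n) \<omega> s, Yc (r n) \<omega> s))"
      have A': "A \<in> ?F s" using A by (simp add: Vc_def)
      have mt: "martingale (M (r n)) ?F (\<lambda>\<omega> t. Xc (r n) \<omega> t - Xc (r n) \<omega> 0)" by (rule mart)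
      have t0: "t \<ge> 0" using st by linarith
      have it: "integrable (M (r n)) (\<lambda>\<omega>. Xc (r n) \<omega> t - Xc (r n) \<omega> 0)"
        and iS: "integrable (M (r n)) (\<lambda>\<omega>. Xc (r n) \<omega> s - Xc (r n) \<omega> 0)"
        using mt t0 st unfolding martingale_def by auto
      have eq: "set_lebesgue_integral (M (r n)) A (\<lambda>\<omega>. Xc (r n) \<omega> t - Xc (r n) \<omega> 0) =
                set_lebesgue_integral (M (r n)) A (\<lambda>\<omega>. Xc (r n) \<omega> s - Xc (r n) \<omega> 0)"
        using mt st A' unfolding martingale_def by blast
      have As: "A \<in> sets (M (r n))"
      proof -
        have "(\<Union>u\<in>{0..s}. {(\<lambda>\<omega>. (Wc (r n) \<omega> u, Xc (r n) \<omega> u, Yc (r n) \<omega> u)) -` B \<inter> space (M (r n)) | B. B \<in> sets borel})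
              \<subseteq> sets (M (r n))" by (auto intro!: measurable_sets[of _ _ borel] simp del: vimage_Int)
        then have "?F s \<subseteq> sets (M (r n))" unfolding nat_filt_def by (rule sets.sigma_sets_subset)
        then show ?thesis using A' by auto
      qed
      have e1: "(\<integral>\<omega>. indicator A \<omega> * ((Xc (r n) \<omega> t - Xc (r n) \<omega> 0) \<bullet> b) \<partial>M (r n)) =
            (\<integral>\<omega>. indicator A \<omega> * ((Xc (r n) \<omega> s - Xc (r n) \<omega> 0) \<bullet> b) \<partial>M (r n))"
        using set_integral_inner[OF it As, of b] set_integral_inner[OF iS As, of b] eq by simp
      have j1: "integrable (M (r n)) (\<lambda>\<omega>. indicator A \<omega> * ((Xc (r n) \<omega> t - Xc (r n) \<omega> 0) \<bullet> b))"
        using integrable_real_mult_indicator[OF As integrable_bounded_linear[OF bounded_linear_inner_left it]]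
        by (simp add: mult.commute)
      have j2: "integrable (M (r n)) (\<lambda>\<omega>. indicator A \<omega> * ((Xc (r n) \<omega> s - Xc (r n) \<omega> 0) \<bullet> b))"
        using integrable_real_mult_indicator[OF As integrable_bounded_linear[OF bounded_linear_inner_left iS]]
        by (simp add: mult.commute)
      have e2: "(\<integral>\<omega>. indicator A \<omega> * ((Xc (r n) \<omega> t - Xc (r n) \<omega> 0) \<bullet> b - (Xc (r n) \<omega> s - Xc (r n) \<omega> 0) \<bullet> b) \<partial>M (r n)) =
            (\<integral>\<omega>. indicator A \<omega> * ((Xc (r n) \<omega> t - Xc (r n) \<omega> 0) \<bullet> b) \<partial>M (r n)) -
            (\<integral>\<omega>. indicator A \<omega> * ((Xc (r n) \<omega> s - Xc (r n) \<omega> 0) \<bullet> b) \<partial>M (r n))"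
        using j1 j2 by (simp add: right_diff_distrib Bochner_Integration.integral_diff)
      show ?thesis using e1 e2 by simp
    qed
  qed
  show ?thesis
    unfolding martingale_def
  proof (intro conjI allI impI ballI)
    fix t :: real and A :: "(real^'d) set" assume t: "t \<ge> 0" and A: "A \<in> sets borel"
    have fs: "(\<lambda>v::(real^'d) \<times> (real^'d) \<times> (real^'k). fst (snd v)) \<in> borel_measurable borel"
      by (intro borel_measurable_continuous_onI continuous_intros)
    have "(\<lambda>v::(real^'d) \<times> (real^'d) \<times> (real^'k). fst (snd v)) -` A \<inter> space borel \<in> sets borel"
      by (rule measurable_sets[OF fs A])
    then have fA: "(\<lambda>v::(real^'d) \<times> (real^'d) \<times> (real^'k). fst (snd v)) -` A \<in> sets borel" by simp
    have "(\<lambda>\<omega>. V' \<omega> t) -` ((\<lambda>v. fst (snd v)) -` A) \<inter> space N \<in> {(\<lambda>\<omega>. V' \<omega> t) -` B \<inter> space N | B. B \<in> sets borel}"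
      using fA by blast
    then have "(\<lambda>\<omega>. V' \<omega> t) -` ((\<lambda>v. fst (snd v)) -` A) \<inter> space N \<in> (\<Union>u\<in>{0..t}. {(\<lambda>\<omega>. V' \<omega> u) -` B \<inter> space N | B. B \<in> sets borel})"
      using t by (intro UN_I[of t]) auto
    then have "(\<lambda>\<omega>. V' \<omega> t) -` ((\<lambda>v. fst (snd v)) -` A) \<inter> space N \<in> nat_filt N V' t"
      unfolding nat_filt_def by (rule sigma_sets.Basic)
    then show "(\<lambda>\<omega>. fst (snd (V' \<omega> t))) -` A \<inter> space N \<in> nat_filt N V' t" by (simp add: vimage_def)
  next
    fix t :: real assume t: "t \<ge> 0"
    show "integrable N (\<lambda>\<omega>. fst (snd (V' \<omega> t)))"
      by (rule integrable_from_basis) (rule wlim.lim_integrable[OF wl t])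
  next
    fix s t A assume h: "0 \<le> s \<and> s \<le> t \<and> A \<in> nat_filt N V' s"
    then have s0: "0 \<le> s" and st: "s \<le> t" and A: "A \<in> nat_filt N V' s" by auto
    have t0: "0 \<le> t" using s0 st by linarith
    have As: "A \<in> sets N"
    proof -
      have "(\<Union>u\<in>{0..s}. {(\<lambda>\<omega>. V' \<omega> u) -` B \<inter> space N | B. B \<in> sets borel}) \<subseteq> sets N"
        by (auto intro!: measurable_sets[of _ _ borel] simp del: vimage_Int)
      then have "nat_filt N V' s \<subseteq> sets N" unfolding nat_filt_def by (rule sets.sigma_sets_subset)
      then show ?thesis using A by auto
    qed
    have iti: "integrable N (\<lambda>\<omega>. fst (snd (V' \<omega> u)))" if "u \<ge> 0" for u
      by (rule integrable_from_basis) (rule wlim.lim_integrable[OF wl that])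
    show "set_lebesgue_integral N A (\<lambda>\<omega>. fst (snd (V' \<omega> t))) = set_lebesgue_integral N A (\<lambda>\<omega>. fst (snd (V' \<omega> s)))"
    proof (rule euclidean_eqI)
      fix b :: "real^'d" assume b: "b \<in> Basis"
      have z: "(\<integral>\<omega>. indicator A \<omega> * (fst (snd (V' \<omega> t)) \<bullet> b - fst (snd (V' \<omega> s)) \<bullet> b) \<partial>N) = 0"
        by (rule wlim.mart_lim[OF wl[OF b] s0 st A])
      have i1: "integrable N (\<lambda>\<omega>. indicator A \<omega> * (fst (snd (V' \<omega> t)) \<bullet> b))"
        using integrable_real_mult_indicator[OF As wlim.lim_integrable[OF wl[OF b] t0]] by (simp add: mult.commute)
      have i2: "integrable N (\<lambda>\<omega>. indicator A \<omega> * (fst (snd (V' \<omega> s)) \<bullet> b))"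
        using integrable_real_mult_indicator[OF As wlim.lim_integrable[OF wl[OF b] s0]] by (simp add: mult.commute)
      have "(\<integral>\<omega>. indicator A \<omega> * (fst (snd (V' \<omega> t)) \<bullet> b) \<partial>N) - (\<integral>\<omega>. indicator A \<omega> * (fst (snd (V' \<omega> s)) \<bullet> b) \<partial>N) = 0"
        using z i1 i2 by (simp add: right_diff_distrib Bochner_Integration.integral_diff)
      then show "set_lebesgue_integral N A (\<lambda>\<omega>. fst (snd (V' \<omega> t))) \<bullet> b = set_lebesgue_integral N A (\<lambda>\<omega>. fst (snd (V' \<omega> s))) \<bullet> b"
        using set_integral_inner[OF iti[OF t0] As, of b] set_integral_inner[OF iti[OF s0] As, of b] by simp
    qed
  qed
qed

end
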